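(* Let $n\ge2$ and $\mathcal G_n$, $z_e$ as in the context. Suppose $f\in\mathcal B(\mathcal G_n)$ with $f(z_e)\neq0$, and that $f_j\in A_{\mathbb C}(\mathcal G_n)$ for all $j\in\mathbb N$ with $f_j\to f$ uniformly. Then $\operatorname{supp}(f)=\{x\in\mathcal G_n:f(x)\neq0\}$ has nonempty interior.
   Context: Let $X=\{\mathbf 0,\mathbf 1\}$, $X^*$ the finite words (with empty word $\varnothing$), $X^\omega$ the infinite words, $C(\eta)=\{\eta w:w\in X^\omega\}$, $\mathbf 1^\infty$ the infinite word of ones. Fix $n\ge2$, a primitive polynomial $f_n$ of degree $n$ over $\mathbb F_2$ with root $\alpha$, and $\operatorname{Tr}(\beta)=\beta+\beta^2+\dots+\beta^{2^{n-1}}\in\mathbb F_2$. $\mathfrak G_n$ is the group of automorphisms of the binary rooted tree $X^*$ generated by $a$ ($a\cdot(\mathbf 0w)=\mathbf 1w$, $a\cdot(\mathbf 1w)=\mathbf 0w$) and $\iota_n(\beta)$, $\beta\in\mathbb F_{2^n}$, where $\iota_n(\beta)\cdot(\mathbf 0w)=\mathbf 0(a^{\operatorname{Tr}(\beta)}\cdot w)$, $\iota_n(\beta)\cdot(\mathbf 1w)=\mathbf 1(\iota_n(\alpha\beta)\cdot w)$; restrictions $g|_x$ are given by $g\cdot(xw)=(g\cdot x)(g|_x\cdot w)$; $e$ is the identity. $\mathcal G_n$ is the groupoid of germs of the action of the inverse semigroup $\{(\eta,g,\mu)\}\cup\{0\}$ on $X^\omega$ with $(\eta,g,\mu):C(\mu)\to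 C(\eta)$, $\mu w\mapsto\eta(g\cdot w)$; germs $[(\eta,g,\mu),w]$, $w\in C(\mu)$, with $[(\eta,g,\mu),w]=[(\eta',g',\mu'),w']$ iff $w=w'$ and some finite prefix $\nu=\mu\epsilon=\mu'\epsilon'$ of $w$ satisfies $\eta(g\cdot\epsilon)=\eta'(g'\cdot\epsilon')$ and $g|_\epsilon=g'|_{\epsilon'}$; basic open bisections $\{[s,w]:w\in U\}$. $z_e=[(\varnothing,e,\varnothing),\mathbf 1^\infty]$. $A_{\mathbb C}(\mathcal G_n)$ is the complex Steinberg algebra (span of characteristic functions of compact open bisections), and $\mathcal B(\mathcal G_n)$ is the space of bounded complex-valued functions on $\mathcal G_n$ with the uniform norm. *)

theory Defs
  imports Complex_Main
begin

text \<open>Alphabet X = {0,1} is rendered as bool (False = 0, True = 1).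
 The field F_{2^n} is an arbitrary finite field type 'k of cardinality 2^n,
 and alpha is a primitive element (root of a primitive polynomial f_n).\<close>

type_synonym fword = "bool list"
type_synonym iword = "nat \<Rightarrow> bool"
type_synonym tauto = "fword \<Rightarrow> fword"
type_synonym sgelem = "fword \<times> tauto \<times> fword"
type_synonym germ = "(sgelem \<times> iword) set"

definition trace :: "nat \<Rightarrow> 'k::field \<Rightarrow> 'k" where
  "trace n \<beta> = (\<Sum>i<n. \<beta> ^ (2 ^ i))"

fun flipa :: "fword \<Rightarrow> fword" where
  "flipa [] = []"
| "flipa (x # w) = (\<not> x) # w"

fun iota :: "nat \<Rightarrow> 'k::field \<Rightarrow> 'k \<Rightarrow> fword \<Rightarrow> fword" where
  "iota n \<alpha> \<beta> [] = []"
| "iota n \<alpha> \<beta> (False # w) = False # (if trace n \<beta> = 0 then w else flipa w)"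
| "iota n \<alpha> \<beta> (True # w) = True # iota n \<alpha> (\<alpha> * \<beta>) w"

inductive_set Gn :: "nat \<Rightarrow> 'k::field \<Rightarrow> tauto set" for n :: nat and \<alpha> :: "'k" where
  G_id: "id \<in> Gn n \<alpha>"
| G_a: "flipa \<in> Gn n \<alpha>"
| G_iota: "iota n \<alpha> \<beta> \<in> Gn n \<alpha>"
| G_comp: "g \<in> Gn n \<alpha> \<Longrightarrow> h \<in> Gn n \<alpha> \<Longrightarrow> g \<circ> h \<in> Gn n \<alpha>"
| G_inv: "g \<in> Gn n \<alpha> \<Longrightarrow> inv g \<in> Gn n \<alpha>"

text \<open>restriction (section) g|_x, defined by g(xw) = (g x)(g|_x w)\<close>
definition restr :: "tauto \<Rightarrow> fword \<Rightarrow> tauto" where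
  "restr g x = (\<lambda>w. drop (length x) (g (x @ w)))"

definition wpre :: "iword \<Rightarrow> nat \<Rightarrow> fword" where
  "wpre w k = map w [0..<k]"

definition conc :: "fword \<Rightarrow> iword \<Rightarrow> iword" where
  "conc \<eta> w = (\<lambda>i. if i < length \<eta> then \<eta> ! i else w (i - length \<eta>))"

definition act_inf :: "tauto \<Rightarrow> iword \<Rightarrow> iword" where
  "act_inf g w = (\<lambda>i. g (wpre w (Suc i)) ! i)"

definition cyl :: "fword \<Rightarrow> iword set" where
  "cyl \<eta> = {conc \<eta> w | w. True}"

definition shiftw :: "nat \<Rightarrow> iword \<Rightarrow> iword" where
  "shiftw k w = (\<lambda>i. w (i + k))"

definition cantor_open :: "iword set \<Rightarrow> bool" where
  "cantor_open V \<longleftrightarrow> (\<forall>w\<in>V. \<exists>k. cyl (wpre w k) \<subseteq> V)"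

definition GDom :: "nat \<Rightarrow> 'k::field \<Rightarrow> (sgelem \<times> iword) set" where
  "GDom n \<alpha> = {((\<eta>, g, \<mu>), w). g \<in> Gn n \<alpha> \<and> w \<in> cyl \<mu>}"

definition gerel :: "sgelem \<times> iword \<Rightarrow> sgelem \<times> iword \<Rightarrow> bool" where
  "gerel p q = (case p of ((\<eta>, g, \<mu>), w) \<Rightarrow> case q of ((\<eta>', g', \<mu>'), w') \<Rightarrow>
      w = w' \<and> (\<exists>\<epsilon> \<epsilon>'. wpre w (length (\<mu> @ \<epsilon>)) = \<mu> @ \<epsilon> \<and> \<mu> @ \<epsilon> = \<mu>' @ \<epsilon>'
                 \<and> \<eta> @ g \<epsilon> = \<eta>' @ g' \<epsilon>' \<and> restr g \<epsilon> = restr g' \<epsilon>'))"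

definition germ :: "nat \<Rightarrow> 'k::field \<Rightarrow> sgelem \<Rightarrow> iword \<Rightarrow> germ" where
  "germ n \<alpha> s w = {q \<in> GDom n \<alpha>. gerel (s, w) q}"

definition Grpd :: "nat \<Rightarrow> 'k::field \<Rightarrow> germ set" where
  "Grpd n \<alpha> = {germ n \<alpha> s w | s w. (s, w) \<in> GDom n \<alpha>}"

definition z_e :: "nat \<Rightarrow> 'k::field \<Rightarrow> germ" where
  "z_e n \<alpha> = germ n \<alpha> ([], id, []) (\<lambda>_. True)"

text \<open>source and range of a germ (independent of the representative)\<close>
definition gsrc :: "germ \<Rightarrow> iword" where
  "gsrc x = snd (SOME p. p \<in> x)"

definition grng :: "germ \<Rightarrow> iword" where
  "grng x = (case SOME p. p \<in> x of ((\<eta>, g, \<mu>), w) \<Rightarrow> conc \<eta> (act_inf g (shiftw (length \<mu>) w)))"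

definition bis :: "nat \<Rightarrow> 'k::field \<Rightarrow> sgelem \<Rightarrow> iword set \<Rightarrow> germ set" where
  "bis n \<alpha> s V = {germ n \<alpha> s w | w. w \<in> V}"

definition G_open :: "nat \<Rightarrow> 'k::field \<Rightarrow> germ set \<Rightarrow> bool" where
  "G_open n \<alpha> W \<longleftrightarrow> W \<subseteq> Grpd n \<alpha> \<and>
     (\<forall>x\<in>W. \<exists>\<eta> g \<mu> V. g \<in> Gn n \<alpha> \<and> cantor_open V \<and> V \<subseteq> cyl \<mu>
        \<and> x \<in> bis n \<alpha> (\<eta>, g, \<mu>) V \<and> bis n \<alpha> (\<eta>, g, \<mu>) V \<subseteq> W)"

definition G_compact :: "nat \<Rightarrow> 'k::field \<Rightarrow> germ set \<Rightarrow> bool" where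
  "G_compact n \<alpha> K \<longleftrightarrow> K \<subseteq> Grpd n \<alpha> \<and>
     (\<forall>\<U>. (\<forall>U\<in>\<U>. G_open n \<alpha> U) \<and> K \<subseteq> \<Union>\<U> \<longrightarrow>
        (\<exists>\<V>\<subseteq>\<U>. finite \<V> \<and> K \<subseteq> \<Union>\<V>))"

definition G_bisection :: "nat \<Rightarrow> 'k::field \<Rightarrow> germ set \<Rightarrow> bool" where
  "G_bisection n \<alpha> B \<longleftrightarrow> B \<subseteq> Grpd n \<alpha> \<and> inj_on gsrc B \<and> inj_on grng B"

definition compact_open_bisection :: "nat \<Rightarrow> 'k::field \<Rightarrow> germ set \<Rightarrow> bool" where
  "compact_open_bisection n \<alpha> B \<longleftrightarrow> G_open n \<alpha> B \<and> G_compact n \<alpha> B \<and> G_bisection n \<alpha> B"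

definition steinberg :: "nat \<Rightarrow> 'k::field \<Rightarrow> (germ \<Rightarrow> complex) set" where
  "steinberg n \<alpha> = {h. \<exists>(k::nat) (c::nat \<Rightarrow> complex) B.
      (\<forall>i<k. compact_open_bisection n \<alpha> (B i)) \<and>
      h = (\<lambda>x. \<Sum>i<k. c i * (if x \<in> B i then 1 else 0))}"

definition bounded_on_G :: "nat \<Rightarrow> 'k::field \<Rightarrow> (germ \<Rightarrow> complex) \<Rightarrow> bool" where
  "bounded_on_G n \<alpha> f \<longleftrightarrow> (\<exists>C. \<forall>x\<in>Grpd n \<alpha>. norm (f x) \<le> C)"

definition gsupp :: "nat \<Rightarrow> 'k::field \<Rightarrow> (germ \<Rightarrow> complex) \<Rightarrow> germ set" where
  "gsupp n \<alpha> f = {x \<in> Grpd n \<alpha>. f x \<noteq> 0}"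

end

theory Submission
  imports Defs "HOL-Computational_Algebra.Polynomial"
begin

locale setting =
  fixes n :: nat and \<alpha> :: "'k::{field,finite}"
  assumes n2: "n \<ge> 2" and cardk: "card (UNIV::'k set) = 2^n"
    and gen: "\<forall>\<beta>::'k. \<beta> \<noteq> 0 \<longrightarrow> (\<exists>k::nat. \<beta> = \<alpha> ^ k)"
begin

definition Q :: nat where "Q = 2^n - 1"

lemma Q_pos: "Q > 0"
proof -
  have "(2::nat)^n \<ge> 2^2" using n2 by (intro power_increasing) auto
  thus ?thesis unfolding Q_def by simp
qed

lemma card_nz: "card (UNIV - {0::'k}) = Q"
  by (simp add: card_Diff_singleton cardk Q_def)

lemma alpha_nz: "\<alpha> \<noteq> 0"
proof
  assume a: "\<alpha> = 0"
  have "UNIV \<subseteq> {0::'k, 1}"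
  proof
    fix b :: 'k
    show "b \<in> {0,1}"
    proof (cases "b = 0")
      case False
      then obtain k where k: "b = \<alpha>^k" using gen by blast
      show ?thesis
      proof (cases k)
        case 0 thus ?thesis using k by simp
      next
        case (Suc j) thus ?thesis using k a False by simp
      qed
    qed auto
  qed
  hence "card (UNIV::'k set) \<le> card {0::'k,1}" by (intro card_mono) auto
  hence "card (UNIV::'k set) \<le> 2" using card_insert_le[of "{1::'k}" 0] by simp
  moreover have "(2::nat)^n \<ge> 2^2" using n2 by (intro power_increasing) auto
  ultimately show False using cardk n2 by simp
qed

lemma no_small_order: assumes "\<alpha>^d = 1" "d > 0" shows "d \<ge> Q"
proof -
  have "\<alpha>^k = \<alpha>^(k mod d)" for k
  proof -
    have "\<alpha>^k = \<alpha>^(d * (k div d) + k mod d)" by simp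
    also have "\<dots> = (\<alpha>^d)^(k div d) * \<alpha>^(k mod d)" by (simp only: power_add power_mult)
    finally have "\<alpha>^k = (\<alpha>^d)^(k div d) * \<alpha>^(k mod d)" .
    thus ?thesis using assms by simp
  qed
  note eq = this
  have "UNIV - {0} \<subseteq> (\<lambda>r. \<alpha>^r) ` {..<d}"
  proof
    fix b :: 'k assume "b \<in> UNIV - {0}"
    then obtain k where k: "b = \<alpha>^k" using gen by blast
    have "b = \<alpha>^(k mod d)" using k eq by simp
    moreover have "k mod d \<in> {..<d}" using assms(2) by simp
    ultimately show "b \<in> (\<lambda>r. \<alpha>^r) ` {..<d}" by (rule image_eqI)
  qed
  hence "card (UNIV - {0::'k}) \<le> card ((\<lambda>r. \<alpha>^r) ` {..<d})"
    by (intro card_mono) auto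
  also have "\<dots> \<le> d" using card_image_le[of "{..<d}"] by simp
  finally show ?thesis using card_nz by simp
qed

lemma pow_inj: assumes "i < j" "j < i + Q" shows "\<alpha>^i \<noteq> \<alpha>^j"
proof
  assume "\<alpha>^i = \<alpha>^j"
  moreover have "\<alpha>^j = \<alpha>^i * \<alpha>^(j-i)" using assms by (simp add: power_add[symmetric])
  ultimately have "\<alpha>^i * \<alpha>^(j-i) = \<alpha>^i * 1" by simp
  hence "\<alpha>^(j-i) = 1" using alpha_nz by simp
  from no_small_order[OF this] assms show False by simp
qed

lemma pow_inj_on: "inj_on (\<lambda>k. \<alpha>^k * b) {K..<K+Q}" if "b \<noteq> 0"
proof (rule inj_onI)
  fix i j assume "i \<in> {K..<K+Q}" "j \<in> {K..<K+Q}" "\<alpha>^i * b = \<alpha>^j * b"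
  hence e: "\<alpha>^i = \<alpha>^j" using that by simp
  show "i = j"
  proof (rule ccontr)
    assume "i \<noteq> j"
    then consider "i < j" | "j < i" by linarith
    thus False using pow_inj[of i j] pow_inj[of j i] e \<open>i \<in> _\<close> \<open>j \<in> _\<close> by cases auto
  qed
qed

lemma pow_bij: "b \<noteq> 0 \<Longrightarrow> (\<lambda>k. \<alpha>^k * b) ` {K..<K+Q} = UNIV - {0}"
proof -
  assume b: "b \<noteq> 0"
  have "(\<lambda>k. \<alpha>^k * b) ` {K..<K+Q} \<subseteq> UNIV - {0}" using b alpha_nz by auto
  moreover have "card ((\<lambda>k. \<alpha>^k * b) ` {K..<K+Q}) = card (UNIV - {0::'k})"
    using card_image[OF pow_inj_on[OF b]] card_nz by simp
  ultimately show ?thesis by (intro card_subset_eq) auto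
qed

lemma alpha_Q: "\<alpha>^Q = 1"
proof -
  have "\<alpha>^Q \<in> (\<lambda>k. \<alpha>^k * 1) ` {0..<0+Q}" using pow_bij[of 1 0] alpha_nz by auto
  then obtain r where r: "r < Q" "\<alpha>^Q = \<alpha>^r" by auto
  show ?thesis
  proof (cases "r = 0")
    case False
    hence "\<alpha>^r \<noteq> \<alpha>^Q" using pow_inj[of r Q] r by simp
    thus ?thesis using r by simp
  qed (use r in simp)
qed

lemma order_dvd: assumes "\<alpha>^d = 1" shows "Q dvd d"
proof -
  have "\<alpha>^d = \<alpha>^(Q * (d div Q) + d mod Q)" by simp
  also have "\<dots> = (\<alpha>^Q)^(d div Q) * \<alpha>^(d mod Q)" by (simp only: power_add power_mult)
  finally have "\<alpha>^d = (\<alpha>^Q)^(d div Q) * \<alpha>^(d mod Q)" .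
  hence "\<alpha>^(d mod Q) = 1" using assms alpha_Q by simp
  moreover have "d mod Q < Q" using Q_pos by simp
  ultimately have "d mod Q = 0" using no_small_order by fastforce
  thus ?thesis by auto
qed

lemma char2: "(1::'k) + 1 = 0"
proof (rule ccontr)
  assume "(1::'k) + 1 \<noteq> 0"
  hence "(-1::'k) \<noteq> 1" by (metis add_eq_0_iff)
  obtain m where m: "(-1::'k) = \<alpha>^m" using gen by (metis neg_equal_0_iff_equal one_neq_zero)
  have "\<alpha>^(2*m) = 1" by (simp add: power_mult[symmetric] m[symmetric] mult.commute power_mult)
  hence "Q dvd 2*m" by (rule order_dvd)
  moreover have "odd Q"
  proof -
    have "even ((2::nat)^n)" using n2 by simp
    moreover have "(2::nat)^n \<ge> 1" by simp
    ultimately show ?thesis unfolding Q_def by (simp add: odd_iff_mod_2_eq_one)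
  qed
  ultimately have "Q dvd m"
  proof -
    assume a: "Q dvd 2*m" "odd Q"
    have "coprime Q 2" using a(2) by (simp add: coprime_commute)
    thus ?thesis using a(1) by (simp add: coprime_dvd_mult_right_iff)
  qed
  then obtain q where "m = Q*q" by auto
  hence "\<alpha>^m = 1" by (simp add: power_mult alpha_Q)
  hence "(-1::'k) = 1" using m by metis
  thus False using \<open>(-1::'k) \<noteq> 1\<close> by blast
qed


lemma frob: "(x + y)^2 = x^2 + (y::'k)^2"
proof -
  have "(x+y)^2 = x^2 + (1+1)*x*y + y^2" by (simp add: power2_eq_square algebra_simps)
  thus ?thesis using char2 by simp
qed

lemma frob_pow: "(x + y)^(2^i) = x^(2^i) + (y::'k)^(2^i)"
proof (induction i)
  case (Suc i)
  have "(x+y)^(2^Suc i) = ((x+y)^(2^i))^2" by (simp add: power_mult[symmetric] mult.commute)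
  also have "\<dots> = (x^(2^i))^2 + (y^(2^i))^2" using Suc frob by simp
  also have "\<dots> = x^(2^Suc i) + y^(2^Suc i)" by (simp add: power_mult[symmetric] mult.commute)
  finally show ?case .
qed simp

lemma trace_add: "trace n (x + y) = trace n x + trace n (y::'k)"
  unfolding trace_def by (simp add: frob_pow sum.distrib)

lemma frob_sum: "finite A \<Longrightarrow> (\<Sum>i\<in>A. f i)^2 = (\<Sum>i\<in>A. (f i :: 'k)^2)"
  by (induction A rule: finite_induct) (simp_all add: frob)

lemma pow_card: "(x::'k)^(2^n) = x"
proof (cases "x = 0")
  case True thus ?thesis by simp
next
  case False
  then obtain m where m: "x = \<alpha>^m" using gen by blast
  have "(2::nat)^n = Q + 1" unfolding Q_def by simp
  hence "x^(2^n) = x * (\<alpha>^m)^Q" using m by (simp add: mult.commute)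
  also have "(\<alpha>^m)^Q = (\<alpha>^Q)^m" by (simp add: power_mult[symmetric] mult.commute)
  finally show ?thesis by (simp add: alpha_Q)
qed

lemma trace_sq: "(trace n x)^2 = trace n (x::'k)"
proof -
  let ?f = "\<lambda>i. x^(2^i)"
  have "(trace n x)^2 = (\<Sum>i<n. (?f i)^2)" unfolding trace_def by (simp add: frob_sum)
  also have "\<dots> = (\<Sum>i<n. ?f (Suc i))" by (simp add: power_mult[symmetric] mult.commute)
  also have "\<dots> = trace n x"
  proof -
    have a: "(\<Sum>i<Suc n. ?f i) = ?f 0 + (\<Sum>i<n. ?f (Suc i))" by (rule sum.lessThan_Suc_shift)
    have b: "(\<Sum>i<Suc n. ?f i) = (\<Sum>i<n. ?f i) + ?f n" by (rule sum.lessThan_Suc)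
    have c: "?f n = ?f 0" using pow_card by simp
    from a b c show ?thesis unfolding trace_def by (simp add: add.commute)
  qed
  finally show ?thesis .
qed

lemma trace01: "trace n x = 0 \<or> trace n (x::'k) = 1"
proof -
  have "trace n x * (trace n x - 1) = 0" using trace_sq[of x] by (simp add: power2_eq_square algebra_simps)
  thus ?thesis by simp
qed

lemma trace_add_iff: "(trace n (x+y) \<noteq> 0) = ((trace n x \<noteq> 0) \<noteq> (trace n (y::'k) \<noteq> 0))"
  using trace01[of x] trace01[of y] char2 by (auto simp: trace_add)

lemma trace_zero: "trace n (0::'k) = 0"
  unfolding trace_def by (simp add: power_0_left)

lemma trace_nonzero: "\<exists>x::'k. trace n x \<noteq> 0"
proof (rule ccontr)
  assume "\<not> ?thesis"
  hence z: "\<forall>x::'k. trace n x = 0" by simp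
  define p :: "'k poly" where "p = (\<Sum>i<n. monom 1 (2^i))"
  have pe: "poly p x = trace n x" for x unfolding p_def trace_def by (simp add: poly_sum poly_monom)
  have "coeff p (2^(n-1)) = (\<Sum>i<n. if i = n - 1 then 1 else 0)"
    unfolding p_def coeff_sum by (intro sum.cong) (auto simp: coeff_monom)
  also have "\<dots> = 1" using n2 by simp
  finally have "p \<noteq> 0" by auto
  hence "card {x. poly p x = 0} \<le> degree p" by (rule card_poly_roots_bound)
  moreover have "degree p \<le> 2^(n-1)" unfolding p_def
    by (rule degree_sum_le) (auto intro: order_trans[OF degree_monom_le])
  moreover have "{x. poly p x = 0} = UNIV" using pe z by auto
  moreover have "(2::nat)^(n-1) < 2^n" using n2 by simp
  ultimately show False using cardk n2 by simp
qed

end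

datatype 'a letter = LA | LI 'a

fun kind :: "'a letter \<Rightarrow> bool" where
  "kind LA = False" | "kind (LI _) = True"

fun push :: "'a::plus letter \<Rightarrow> 'a letter list \<Rightarrow> 'a letter list" where
  "push LA (LA # ws) = ws"
| "push (LI b) (LI c # ws) = LI (b + c) # ws"
| "push l ws = l # ws"

definition nrmz :: "'a::plus letter list \<Rightarrow> 'a letter list" where
  "nrmz ws = foldr push ws []"

fun nrm :: "'a letter list \<Rightarrow> bool" where
  "nrm (l1 # l2 # ws) = (kind l1 \<noteq> kind l2 \<and> nrm (l2 # ws))"
| "nrm _ = True"

definition countI :: "'a letter list \<Rightarrow> nat" where
  "countI ws = length (filter kind ws)"

lemma flipa_flipa[simp]: "flipa (flipa w) = w"
  by (cases w) auto

lemma flipa_len[simp]: "length (flipa w) = length w"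
  by (cases w) auto

lemma restr_Nil[simp]: "restr g [] = g"
  by (simp add: restr_def fun_eq_iff)

lemma nrm_tl: "nrm (l # ws) \<Longrightarrow> nrm ws"
  by (cases ws) auto

lemma nrm_kind: "nrm (l # ws) \<Longrightarrow> kind l' = kind l \<Longrightarrow> nrm (l' # ws)"
  by (cases ws) auto

lemma nrm_push: "nrm ws \<Longrightarrow> nrm (push l ws)"
  by (induction l ws rule: push.induct) (auto dest: nrm_tl intro: nrm_kind)

lemma nrm_nrmz: "nrm (nrmz ws)"
  unfolding nrmz_def by (induction ws) (auto intro: nrm_push)

lemma countI_Cons[simp]: "countI (l # ws) = (if kind l then Suc (countI ws) else countI ws)"
  by (simp add: countI_def)

lemma countI_Nil[simp]: "countI [] = 0"
  by (simp add: countI_def)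

lemma countI_append[simp]: "countI (xs @ ys) = countI xs + countI ys"
  by (simp add: countI_def)

lemma countI_push: "countI (push l ws) \<le> countI (l # ws)"
  by (induction l ws rule: push.induct) auto

lemma countI_nrmz: "countI (nrmz ws) \<le> countI ws"
proof (induction ws)
  case (Cons l ws)
  have "countI (nrmz (l # ws)) = countI (push l (nrmz ws))" by (simp add: nrmz_def)
  also have "\<dots> \<le> countI (l # nrmz ws)" by (rule countI_push)
  also have "\<dots> \<le> countI (l # ws)" using Cons by simp
  finally show ?case .
qed (simp add: nrmz_def)

context setting
begin

definition evl :: "'k letter \<Rightarrow> fword \<Rightarrow> fword" where
  "evl l = (case l of LA \<Rightarrow> flipa | LI b \<Rightarrow> iota n \<alpha> b)"

primrec ev :: "'k letter list \<Rightarrow> fword \<Rightarrow> fword" where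
  "ev [] = id"
| "ev (l # ws) = evl l \<circ> ev ws"

fun lperm :: "'k letter \<Rightarrow> bool \<Rightarrow> bool" where
  "lperm LA x = (\<not> x)" | "lperm (LI b) x = x"

fun lres :: "'k letter \<Rightarrow> bool \<Rightarrow> 'k letter list" where
  "lres LA x = []"
| "lres (LI b) x = (if x then [LI (\<alpha> * b)] else if trace n b = 0 then [] else [LA])"

primrec wperm :: "'k letter list \<Rightarrow> bool \<Rightarrow> bool" where
  "wperm [] x = x"
| "wperm (l # ws) x = lperm l (wperm ws x)"

primrec wres :: "'k letter list \<Rightarrow> bool \<Rightarrow> 'k letter list" where
  "wres [] x = []"
| "wres (l # ws) x = lres l (wperm ws x) @ wres ws x"

lemma ev_append: "ev (xs @ ys) = ev xs \<circ> ev ys"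
  by (induction xs) auto

lemma iota_iota: "iota n \<alpha> b (iota n \<alpha> c w) = iota n \<alpha> (b + c) w"
proof (induction w arbitrary: b c)
  case (Cons x w)
  show ?case
  proof (cases x)
    case True thus ?thesis using Cons by (simp add: distrib_left)
  next
    case False thus ?thesis using trace_add_iff[of b c] by (auto simp: add.commute)
  qed
qed simp

lemma iota_0: "iota n \<alpha> 0 w = w"
proof (induction w)
  case (Cons x w) thus ?case using trace_zero by (cases x) auto
qed simp

lemma iota_0': "iota n \<alpha> 0 = id"
  using iota_0 by auto

lemma iota_len[simp]: "length (iota n \<alpha> b w) = length w"
  by (induction n \<alpha> b w rule: iota.induct) auto

lemma iota_ones: "iota n \<alpha> b (replicate j True @ w) = replicate j True @ iota n \<alpha> (\<alpha>^j * b) w"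
  by (induction j arbitrary: b) (auto simp: mult.assoc mult.left_commute)

lemma dbl: "b + b = (0::'k)"
proof -
  have "b + b = (1 + 1) * b" by (simp add: algebra_simps)
  thus ?thesis using char2 by simp
qed

lemma evl_evl: "evl l (evl l w) = w"
  by (cases l) (auto simp: evl_def iota_iota dbl iota_0)

lemma evl_Cons: "evl l (x # w) = lperm l x # ev (lres l x) w"
  by (cases l; cases x) (auto simp: evl_def)

lemma ev_Nil[simp]: "ev ws [] = []"
proof (induction ws)
  case (Cons l ws) thus ?case by (cases l) (auto simp: evl_def)
qed simp

lemma ev_Cons: "ev ws (x # w) = wperm ws x # ev (wres ws x) w"
  by (induction ws) (auto simp: evl_Cons ev_append)

lemma ev_push: "ev (push l ws) = evl l \<circ> ev ws"
  by (induction l ws rule: push.induct) (auto simp: fun_eq_iff evl_evl evl_def iota_iota)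

lemma ev_nrmz: "ev (nrmz ws) = ev ws"
  unfolding nrmz_def by (induction ws) (auto simp: ev_push)

end

context setting
begin

primrec rw :: "'k letter list \<Rightarrow> fword \<Rightarrow> 'k letter list" where
  "rw ws [] = ws"
| "rw ws (x # u) = rw (nrmz (wres ws x)) u"

primrec pw :: "'k letter list \<Rightarrow> fword \<Rightarrow> fword" where
  "pw ws [] = []"
| "pw ws (x # u) = wperm ws x # pw (nrmz (wres ws x)) u"

lemma ev_split: "ev ws (u @ w) = pw ws u @ ev (rw ws u) w"
proof (induction u arbitrary: ws)
  case (Cons x u)
  have "ev ws ((x#u)@w) = wperm ws x # ev (nrmz (wres ws x)) (u@w)" by (simp add: ev_Cons ev_nrmz)
  also have "\<dots> = wperm ws x # (pw (nrmz (wres ws x)) u @ ev (rw (nrmz (wres ws x)) u) w)"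
    by (simp only: Cons.IH)
  finally show ?case by simp
qed simp

lemma pw_len[simp]: "length (pw ws u) = length u"
  by (induction u arbitrary: ws) auto

lemma ev_pw: "ev ws u = pw ws u"
  using ev_split[of ws u "[]"] by simp

lemma restr_ev: "restr (ev ws) u = ev (rw ws u)"
  by (simp add: restr_def fun_eq_iff ev_split)

lemma rw_append: "rw ws (u @ v) = rw (rw ws u) v"
  by (induction u arbitrary: ws) auto

lemma ev_rev: "ev ws \<circ> ev (rev ws) = id"
  by (induction ws) (auto simp: ev_append fun_eq_iff evl_evl)

definition TA :: "tauto \<Rightarrow> bool" where "TA g \<longleftrightarrow> (\<exists>ws. g = ev ws)"

lemma TA_len: "TA g \<Longrightarrow> length (g u) = length u"
  by (auto simp: TA_def ev_pw)

lemma TA_app: "TA g \<Longrightarrow> g (u @ w) = g u @ restr g u w"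
  by (auto simp: TA_def restr_ev ev_split ev_pw[symmetric])

lemma TA_restr: "TA g \<Longrightarrow> TA (restr g u)"
  by (auto simp: TA_def restr_ev)

lemma restr_restr: "TA g \<Longrightarrow> restr (restr g u) v = restr g (u @ v)"
  by (auto simp: TA_def restr_ev rw_append)

lemma TA_Nil: "TA g \<Longrightarrow> g [] = []"
  by (auto simp: TA_def)

lemma TA_id: "TA id"
  unfolding TA_def by (rule exI[of _ "[]"]) simp

lemma TA_flipa: "TA flipa"
  unfolding TA_def by (rule exI[of _ "[LA]"]) (simp add: evl_def)

lemma TA_iota: "TA (iota n \<alpha> b)"
  unfolding TA_def by (rule exI[of _ "[LI b]"]) (simp add: evl_def)

lemma Gn_ev: "g \<in> Gn n \<alpha> \<Longrightarrow> \<exists>ws. g = ev ws"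
proof (induction rule: Gn.induct)
  case G_id thus ?case by (rule exI[of _ "[]"]) simp
next
  case G_a thus ?case by (rule exI[of _ "[LA]"]) (simp add: evl_def)
next
  case (G_iota b) thus ?case by (rule exI[of _ "[LI b]"]) (simp add: evl_def)
next
  case (G_comp g h)
  then obtain xs ys where "g = ev xs" "h = ev ys" by blast
  thus ?case by (intro exI[of _ "xs @ ys"]) (simp add: ev_append)
next
  case (G_inv g)
  then obtain xs where g: "g = ev xs" by blast
  have "inv (ev xs) = ev (rev xs)"
    by (rule inv_unique_comp) (use ev_rev[of xs] ev_rev[of "rev xs"] in simp_all)
  thus ?case using g by blast
qed

lemma Gn_TA: "g \<in> Gn n \<alpha> \<Longrightarrow> TA g"
  using Gn_ev TA_def by blast

lemma lperm_LI[simp]: "lperm (LI b) x = x" by simp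

lemma countI_lres: "countI (lres (LI b) x) = (if x then 1 else 0)"
  by auto

lemma wres_count_aux:
  "nrm ws \<Longrightarrow> (\<forall>b ws'. ws = LI b # ws' \<longrightarrow>
      countI (wres ws x) = (if wperm ws' x then (countI ws + 1) div 2 else countI ws div 2))
    \<and> countI (wres ws x) \<le> (countI ws + 1) div 2"
proof (induction "length ws" arbitrary: ws rule: less_induct)
  case less
  show ?case
  proof (cases ws)
    case Nil thus ?thesis by simp
  next
    case (Cons l ws1)
    show ?thesis
    proof (cases l)
      case LA
      have nrm1: "nrm ws1" using less.prems Cons nrm_tl by blast
      have "countI (wres ws1 x) \<le> (countI ws1 + 1) div 2"
        using less.hyps[of ws1] nrm1 Cons by simp
      thus ?thesis using Cons LA by simp
    next
      case (LI b)
      show ?thesis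
      proof (cases ws1)
        case Nil thus ?thesis using Cons LI by simp
      next
        case (Cons l2 ws2)
        have l2: "l2 = LA" using less.prems \<open>ws = l # ws1\<close> Cons LI by (cases l2) auto
        show ?thesis
        proof (cases ws2)
          case Nil thus ?thesis using \<open>ws = l # ws1\<close> Cons LI l2 by simp
        next
          case (Cons l3 ws3)
          obtain c where l3: "l3 = LI c"
            using less.prems \<open>ws = l # ws1\<close> \<open>ws1 = l2 # ws2\<close> Cons l2 by (cases l3) auto
          have nrm2: "nrm ws2" using less.prems \<open>ws = l # ws1\<close> \<open>ws1 = l2 # ws2\<close> nrm_tl by blast
          have IH: "countI (wres ws2 x) = (if wperm ws3 x then (countI ws2 + 1) div 2 else countI ws2 div 2)"
            using less.hyps[of ws2] nrm2 Cons l3 \<open>ws = l # ws1\<close> \<open>ws1 = l2 # ws2\<close> by simp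
          have e1: "wperm ws1 x = (\<not> wperm ws3 x)" using \<open>ws1 = l2 # ws2\<close> Cons l2 l3 by simp
          have e2: "countI (wres ws x) = (if wperm ws1 x then 1 else 0) + countI (wres ws2 x)"
            using \<open>ws = l # ws1\<close> \<open>ws1 = l2 # ws2\<close> LI l2 by simp
          have e3: "countI ws = Suc (countI ws2)" using \<open>ws = l # ws1\<close> \<open>ws1 = l2 # ws2\<close> LI l2 by simp
          have "countI (wres ws x) = (if wperm ws1 x then (countI ws + 1) div 2 else countI ws div 2)"
            using IH e1 e2 e3 by auto
          thus ?thesis using \<open>ws = l # ws1\<close> LI by auto
        qed
      qed
    qed
  qed
qed

lemma wres_count: "nrm ws \<Longrightarrow> countI (nrmz (wres ws x)) \<le> (countI ws + 1) div 2"
  using wres_count_aux[of ws x] countI_nrmz[of "wres ws x"] by linarith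

lemma rw_count: "nrm ws \<Longrightarrow> countI (rw ws u) \<le> max 1 (countI ws - length u) \<and> nrm (rw ws u)"
proof (induction u arbitrary: ws)
  case (Cons x u)
  have "countI (nrmz (wres ws x)) \<le> max 1 (countI ws - 1)"
    using wres_count[OF Cons.prems, of x] by linarith
  moreover have "countI (rw (nrmz (wres ws x)) u) \<le> max 1 (countI (nrmz (wres ws x)) - length u)"
    using Cons.IH[OF nrm_nrmz] by blast
  moreover have "max 1 (countI (nrmz (wres ws x)) - length u) \<le> max 1 (countI ws - length (x # u))"
    using calculation(1) by (simp add: max_def split: if_splits; arith)
  ultimately show ?case using Cons.IH[OF nrm_nrmz, of "wres ws x"] by (simp del: length_Cons)
qed simp

lemma contraction: "g \<in> Gn n \<alpha> \<Longrightarrow> \<exists>J ws. nrm ws \<and> countI ws \<le> 1 \<and> restr g (replicate J True) = ev ws"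
proof -
  assume "g \<in> Gn n \<alpha>"
  then obtain ws0 where g: "g = ev ws0" using Gn_ev by blast
  let ?ws = "nrmz ws0"
  have "g = ev ?ws" using g ev_nrmz by simp
  have r: "countI (rw ?ws u) \<le> max 1 (countI ?ws - length u) \<and> nrm (rw ?ws u)" for u
    using rw_count[OF nrm_nrmz] by blast
  let ?u = "replicate (countI ?ws) True"
  have "restr g ?u = ev (rw ?ws ?u)" using \<open>g = ev ?ws\<close> restr_ev by simp
  moreover have "countI (rw ?ws ?u) \<le> 1" "nrm (rw ?ws ?u)" using r[of ?u] by auto
  ultimately show ?thesis by blast
qed

end

abbreviation ones :: "nat \<Rightarrow> fword" where "ones k \<equiv> replicate k True"

definition phi :: "bool \<Rightarrow> tauto" where "phi s = (if s then flipa else id)"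

abbreviation TT :: iword where "TT \<equiv> (\<lambda>_. True)"

lemma wpre_len[simp]: "length (wpre w k) = k"
  by (simp add: wpre_def)

lemma wpre_add: "wpre w (a + b) = wpre w a @ wpre (shiftw a w) b"
  by (rule nth_equalityI) (auto simp: wpre_def shiftw_def nth_append add.commute)

lemma wpre_Suc: "wpre w (Suc k) = wpre w k @ [w k]"
  by (simp add: wpre_def)

lemma wpre_TT: "wpre TT k = ones k"
  by (simp add: wpre_def map_replicate_const)

lemma wpre_nth: "i < k \<Longrightarrow> wpre w k ! i = w i"
  by (simp add: wpre_def)

lemma wpre_conc: "wpre (conc \<mu> v) (length \<mu> + k) = \<mu> @ wpre v k"
  by (rule nth_equalityI) (auto simp: wpre_def conc_def nth_append)

lemma wpre_conc0: "wpre (conc \<mu> v) (length \<mu>) = \<mu>"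
  using wpre_conc[of \<mu> v 0] by (simp add: wpre_def)

lemma cyl_iff: "w \<in> cyl \<mu> \<longleftrightarrow> wpre w (length \<mu>) = \<mu>"
proof
  assume "w \<in> cyl \<mu>"
  thus "wpre w (length \<mu>) = \<mu>" by (auto simp: cyl_def wpre_conc0)
next
  assume a: "wpre w (length \<mu>) = \<mu>"
  have "w = conc \<mu> (shiftw (length \<mu>) w)"
  proof
    fix i show "w i = conc \<mu> (shiftw (length \<mu>) w) i"
      using wpre_nth[of i "length \<mu>" w] a by (auto simp: conc_def shiftw_def)
  qed
  thus "w \<in> cyl \<mu>" by (auto simp: cyl_def)
qed

lemma conc_cyl: "conc \<mu> v \<in> cyl \<mu>"
  by (auto simp: cyl_def)

lemma cyl_conc: "w \<in> cyl \<mu> \<Longrightarrow> w = conc \<mu> (shiftw (length \<mu>) w)"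
proof
  fix i assume "w \<in> cyl \<mu>"
  hence a: "wpre w (length \<mu>) = \<mu>" by (simp add: cyl_iff)
  show "w i = conc \<mu> (shiftw (length \<mu>) w) i"
    using wpre_nth[of i "length \<mu>" w] a by (auto simp: conc_def shiftw_def)
qed

lemma conc_nth_less: "i < length \<mu> \<Longrightarrow> conc \<mu> v i = \<mu> ! i"
  by (simp add: conc_def)

lemma cantor_open_cyl: "cantor_open (cyl u)"
  unfolding cantor_open_def by (auto simp: cyl_iff intro!: exI[of _ "length u"])

lemma cyl_mono: "wpre w k \<in> set [] \<or> True"
  by simp

lemma cyl_prefix_sub: "w \<in> cyl u \<Longrightarrow> length u \<le> k \<Longrightarrow> cyl (wpre w k) \<subseteq> cyl u"
proof
  fix x assume w: "w \<in> cyl u" and k: "length u \<le> k" and x: "x \<in> cyl (wpre w k)"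
  have "wpre x k = wpre w k" using x by (simp add: cyl_iff)
  hence "take (length u) (wpre x k) = take (length u) (wpre w k)" by simp
  moreover have "take (length u) (wpre y k) = wpre y (length u)" for y
    using k wpre_add[of y "length u" "k - length u"] by simp
  ultimately have "wpre x (length u) = wpre w (length u)" by simp
  thus "x \<in> cyl u" using w by (simp add: cyl_iff)
qed

lemma cantor_open_Int: "cantor_open A \<Longrightarrow> cantor_open B \<Longrightarrow> cantor_open (A \<inter> B)"
  unfolding cantor_open_def
proof safe
  fix w assume A: "\<forall>w\<in>A. \<exists>k. cyl (wpre w k) \<subseteq> A" and B: "\<forall>w\<in>B. \<exists>k. cyl (wpre w k) \<subseteq> B"
    and "w \<in> A" "w \<in> B"
  then obtain k1 k2 where k1: "cyl (wpre w k1) \<subseteq> A" and k2: "cyl (wpre w k2) \<subseteq> B" by blast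
  have w: "w \<in> cyl (wpre w k)" for k by (simp add: cyl_iff)
  have "cyl (wpre w (max k1 k2)) \<subseteq> cyl (wpre w k1)" "cyl (wpre w (max k1 k2)) \<subseteq> cyl (wpre w k2)"
    by (rule cyl_prefix_sub[OF w]; simp)+
  thus "\<exists>k. cyl (wpre w k) \<subseteq> A \<inter> B" using k1 k2 by blast
qed

lemma open_TT: "cantor_open V \<Longrightarrow> TT \<in> V \<Longrightarrow> \<exists>M. cyl (ones M) \<subseteq> V"
  unfolding cantor_open_def using wpre_TT by metis

lemma phi_simps[simp]: "phi s [] = []" "phi s (x # w) = (if s then \<not> x else x) # w"
  by (auto simp: phi_def)

lemma restr_phi_Cons[simp]: "restr (phi s) (x # u) = id"
  by (auto simp: restr_def phi_def fun_eq_iff)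

lemma flipa_neq_id: "flipa \<noteq> id"
proof
  assume "flipa = id" hence "flipa [True] = [True]" by simp
  thus False by simp
qed

lemma phi_inj: "phi a \<epsilon> = phi s \<epsilon> \<Longrightarrow> restr (phi a) \<epsilon> = restr (phi s) \<epsilon> \<Longrightarrow> a = s"
  by (cases \<epsilon>) (auto simp: phi_def flipa_neq_id flipa_neq_id[symmetric] split: if_splits)

lemma phi_len[simp]: "length (phi s w) = length w"
  by (simp add: phi_def)

context setting
begin

lemma TA_phi: "TA (phi s)"
  by (simp add: phi_def TA_flipa TA_id)

lemma phi_Gn: "phi s \<in> Gn n \<alpha>"
  by (simp add: phi_def Gn.intros)

lemma iota_ones0: "iota n \<alpha> b (ones j) = ones j"
  using iota_ones[of b j "[]"] by simp

lemma restr_iota_ones: "restr (iota n \<alpha> b) (ones j) = iota n \<alpha> (\<alpha>^j * b)"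
  by (simp add: restr_def fun_eq_iff iota_ones)

lemma iota_False: "iota n \<alpha> b (False # w) = False # phi (trace n b \<noteq> 0) w"
  by (simp add: phi_def)

lemma restr_iota_F: "restr (iota n \<alpha> b) [False] = phi (trace n b \<noteq> 0)"
  by (simp add: restr_def fun_eq_iff phi_def)

lemma restr_iota_onesF: "restr (iota n \<alpha> b) (ones k @ [False]) = phi (trace n (\<alpha>^k * b) \<noteq> 0)"
  using restr_restr[OF TA_iota, of b "ones k" "[False]"] by (simp add: restr_iota_ones restr_iota_F)

lemma iota_onesF: "iota n \<alpha> b (ones k @ [False]) = ones k @ [False]"
  using iota_ones[of b k "[False]"] by simp

lemma forms:
  assumes "nrm ws" "countI ws \<le> 1"
  shows "ws = [] \<or> ws = [LA] \<or> (\<exists>b. ws = [LI b] \<or> ws = [LA, LI b] \<or> ws = [LI b, LA] \<or> ws = [LA, LI b, LA])"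
proof (cases ws)
  case (Cons l1 r1)
  show ?thesis
  proof (cases r1)
    case Nil thus ?thesis using Cons by (cases l1) auto
  next
    case (Cons l2 r2)
    show ?thesis
    proof (cases r2)
      case Nil thus ?thesis using Cons \<open>ws = l1 # r1\<close> assms by (cases l1; cases l2) auto
    next
      case (Cons l3 r3)
      show ?thesis
      proof (cases r3)
        case Nil thus ?thesis using Cons \<open>ws = l1 # r1\<close> \<open>r1 = l2 # r2\<close> assms
          by (cases l1; cases l2; cases l3) auto
      next
        case (Cons l4 r4)
        thus ?thesis using \<open>r2 = l3 # r3\<close> \<open>ws = l1 # r1\<close> \<open>r1 = l2 # r2\<close> assms
          by (cases l1; cases l2; cases l3; cases l4) auto
      qed
    qed
  qed
qed simp

lemma h_analysis:
  assumes "nrm ws" "countI ws \<le> 1" "ev ws (True # True # r) = True # True # r'"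
  shows "\<exists>j \<gamma>. j \<le> 1 \<and> ev ws (ones j) = ones j \<and> restr (ev ws) (ones j) = iota n \<alpha> \<gamma>"
proof -
  consider "ws = []" | "ws = [LA]" | b where "ws = [LI b]" | b where "ws = [LA, LI b]"
    | b where "ws = [LI b, LA]" | b where "ws = [LA, LI b, LA]"
    using forms[OF assms(1,2)] by blast
  thus ?thesis
  proof cases
    case 1 thus ?thesis by (intro exI[of _ 0] exI[of _ 0]) (simp add: iota_0')
  next
    case 2 thus ?thesis using assms(3) by (simp add: evl_def)
  next
    case (3 b) thus ?thesis by (intro exI[of _ 0] exI[of _ b]) (simp add: evl_def)
  next
    case (4 b) thus ?thesis using assms(3) by (simp add: evl_def)
  next
    case (5 b) thus ?thesis using assms(3) by (simp add: evl_def)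
  next
    case (6 b)
    have tb: "trace n b = 0" using assms(3) 6 by (simp add: evl_def split: if_splits)
    have "restr (ev ws) [True] = id"
      using 6 tb by (simp add: evl_def restr_def fun_eq_iff)
    thus ?thesis using 6 tb by (intro exI[of _ 1] exI[of _ 0]) (simp add: evl_def iota_0')
  qed
qed

end

lemma finite_threshold:
  assumes "finite A" "\<forall>x\<in>A. \<exists>K::nat. \<forall>k\<ge>K. R x k"
  shows "\<exists>K. \<forall>x\<in>A. \<forall>k\<ge>K. R x k"
  using assms
proof (induction A rule: finite_induct)
  case (insert x F)
  then obtain K1 K2 where "\<forall>k\<ge>K1. R x k" "\<forall>y\<in>F. \<forall>k\<ge>K2. R y k" by auto
  thus ?case by (intro exI[of _ "max K1 K2"]) auto
qed simp

lemma cyl_append_sub: "w \<in> cyl (u @ u') \<Longrightarrow> w \<in> cyl u"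
proof -
  assume "w \<in> cyl (u @ u')"
  hence "wpre w (length u + length u') = u @ u'" by (simp add: cyl_iff)
  hence "wpre w (length u) @ wpre (shiftw (length u) w) (length u') = u @ u'" by (simp add: wpre_add)
  hence "wpre w (length u) = u" by (simp add: append_eq_append_conv)
  thus ?thesis by (simp add: cyl_iff)
qed

lemma gerel_iff: "gerel ((\<eta>,g,\<mu>),w) ((\<eta>',g',\<mu>'),w') \<longleftrightarrow> w = w' \<and>
   (\<exists>\<epsilon> \<epsilon>'. wpre w (length \<mu> + length \<epsilon>) = \<mu> @ \<epsilon> \<and> \<mu> @ \<epsilon> = \<mu>' @ \<epsilon>' \<and>
      \<eta> @ g \<epsilon> = \<eta>' @ g' \<epsilon>' \<and> restr g \<epsilon> = restr g' \<epsilon>')"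
  by (simp add: gerel_def)

lemma gerel_sym: "gerel p q \<Longrightarrow> gerel q p"
proof -
  assume a: "gerel p q"
  obtain \<eta> g \<mu> w where p: "p = ((\<eta>,g,\<mu>),w)" by (metis prod.collapse)
  obtain \<eta>' g' \<mu>' w' where q: "q = ((\<eta>',g',\<mu>'),w')" by (metis prod.collapse)
  from a obtain \<epsilon> \<epsilon>' where e: "w = w'" "wpre w (length \<mu> + length \<epsilon>) = \<mu> @ \<epsilon>" "\<mu> @ \<epsilon> = \<mu>' @ \<epsilon>'"
      "\<eta> @ g \<epsilon> = \<eta>' @ g' \<epsilon>'" "restr g \<epsilon> = restr g' \<epsilon>'"
    unfolding p q gerel_iff by blast
  have "wpre w' (length \<mu>' + length \<epsilon>') = \<mu>' @ \<epsilon>'" using e by (metis length_append)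
  thus ?thesis unfolding p q gerel_iff using e by metis
qed

context setting
begin

lemma GDom_iff: "((\<eta>,g,\<mu>),w) \<in> GDom n \<alpha> \<longleftrightarrow> g \<in> Gn n \<alpha> \<and> w \<in> cyl \<mu>"
  by (simp add: GDom_def)

lemma gerel_refl: "w \<in> cyl \<mu> \<Longrightarrow> gerel ((\<eta>,g,\<mu>),w) ((\<eta>,g,\<mu>),w)"
  by (simp add: gerel_iff cyl_iff) (rule exI[of _ "[]"], simp)

lemma gerel_ext:
  assumes "TA g" "TA g'" "\<mu> @ \<epsilon> = wpre w L" "\<mu>' @ \<epsilon>' = wpre w L" "\<eta> @ g \<epsilon> = \<eta>' @ g' \<epsilon>'"
    "restr g \<epsilon> = restr g' \<epsilon>'" "L \<le> L'"
  shows "\<exists>\<epsilon>1 \<epsilon>1'. \<mu> @ \<epsilon>1 = wpre w L' \<and> \<mu>' @ \<epsilon>1' = wpre w L' \<and> \<eta> @ g \<epsilon>1 = \<eta>' @ g' \<epsilon>1'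
     \<and> restr g \<epsilon>1 = restr g' \<epsilon>1'"
proof -
  define \<delta> where "\<delta> = wpre (shiftw L w) (L' - L)"
  have W: "wpre w L' = wpre w L @ \<delta>" using wpre_add[of w L "L' - L"] assms(7) by (simp add: \<delta>_def)
  show ?thesis
  proof (intro exI conjI)
    show "\<mu> @ \<epsilon> @ \<delta> = wpre w L'" using W assms(3) by simp
    show "\<mu>' @ \<epsilon>' @ \<delta> = wpre w L'" using W assms(4) by simp
    show "\<eta> @ g (\<epsilon> @ \<delta>) = \<eta>' @ g' (\<epsilon>' @ \<delta>)"
      using TA_app[OF assms(1)] TA_app[OF assms(2)] assms(5,6) by (metis append_assoc)
    show "restr g (\<epsilon> @ \<delta>) = restr g' (\<epsilon>' @ \<delta>)"
      using restr_restr[OF assms(1)] restr_restr[OF assms(2)] assms(6) by metis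
  qed
qed

lemma gerel_at:
  assumes "gerel ((\<eta>,g,\<mu>),w) ((\<eta>',g',\<mu>'),w')" "TA g" "TA g'"
  shows "w = w' \<and> (\<exists>L0. \<forall>L\<ge>L0. \<exists>\<epsilon> \<epsilon>'. \<mu> @ \<epsilon> = wpre w L \<and> \<mu>' @ \<epsilon>' = wpre w L
      \<and> \<eta> @ g \<epsilon> = \<eta>' @ g' \<epsilon>' \<and> restr g \<epsilon> = restr g' \<epsilon>')"
proof -
  from assms(1) obtain \<epsilon> \<epsilon>' where w: "w = w'" and e: "wpre w (length \<mu> + length \<epsilon>) = \<mu> @ \<epsilon>"
    "\<mu> @ \<epsilon> = \<mu>' @ \<epsilon>'" "\<eta> @ g \<epsilon> = \<eta>' @ g' \<epsilon>'" "restr g \<epsilon> = restr g' \<epsilon>'"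
    by (auto simp: gerel_iff)
  show ?thesis
  proof (intro conjI exI[of _ "length \<mu> + length \<epsilon>"] allI impI)
    show "w = w'" by (rule w)
    fix L assume "length \<mu> + length \<epsilon> \<le> L"
    moreover have e1: "\<mu> @ \<epsilon> = wpre w (length \<mu> + length \<epsilon>)" using e(1) by simp
    moreover have e2: "\<mu>' @ \<epsilon>' = wpre w (length \<mu> + length \<epsilon>)" using e(1,2) by simp
    ultimately show "\<exists>\<epsilon> \<epsilon>'. \<mu> @ \<epsilon> = wpre w L \<and> \<mu>' @ \<epsilon>' = wpre w L \<and> \<eta> @ g \<epsilon> = \<eta>' @ g' \<epsilon>' \<and> restr g \<epsilon> = restr g' \<epsilon>'"
      using gerel_ext[OF assms(2,3) e1 e2 e(3) e(4)] by blast
  qed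
qed

lemma gerel_trans:
  assumes "gerel ((\<eta>1,g1,\<mu>1),w1) ((\<eta>2,g2,\<mu>2),w2)" "gerel ((\<eta>2,g2,\<mu>2),w2) ((\<eta>3,g3,\<mu>3),w3)"
    "TA g1" "TA g2" "TA g3"
  shows "gerel ((\<eta>1,g1,\<mu>1),w1) ((\<eta>3,g3,\<mu>3),w3)"
proof -
  obtain L1 where w12: "w1 = w2" and L1: "\<forall>L\<ge>L1. \<exists>\<epsilon> \<epsilon>'. \<mu>1 @ \<epsilon> = wpre w1 L \<and> \<mu>2 @ \<epsilon>' = wpre w1 L
      \<and> \<eta>1 @ g1 \<epsilon> = \<eta>2 @ g2 \<epsilon>' \<and> restr g1 \<epsilon> = restr g2 \<epsilon>'"
    using gerel_at[OF assms(1,3,4)] by blast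
  obtain L2 where w23: "w2 = w3" and L2: "\<forall>L\<ge>L2. \<exists>\<epsilon> \<epsilon>'. \<mu>2 @ \<epsilon> = wpre w2 L \<and> \<mu>3 @ \<epsilon>' = wpre w2 L
      \<and> \<eta>2 @ g2 \<epsilon> = \<eta>3 @ g3 \<epsilon>' \<and> restr g2 \<epsilon> = restr g3 \<epsilon>'"
    using gerel_at[OF assms(2,4,5)] by blast
  let ?L = "max L1 L2"
  obtain a a' where A: "\<mu>1 @ a = wpre w1 ?L" "\<mu>2 @ a' = wpre w1 ?L" "\<eta>1 @ g1 a = \<eta>2 @ g2 a'" "restr g1 a = restr g2 a'"
    using L1[rule_format, OF max.cobounded1] by blast
  obtain b b' where B: "\<mu>2 @ b = wpre w1 ?L" "\<mu>3 @ b' = wpre w1 ?L" "\<eta>2 @ g2 b = \<eta>3 @ g3 b'" "restr g2 b = restr g3 b'"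
    using L2[rule_format, OF max.cobounded2] w12 by blast
  have "\<mu>2 @ a' = \<mu>2 @ b" using A(2) B(1) by simp
  hence "a' = b" by simp
  hence "\<eta>1 @ g1 a = \<eta>3 @ g3 b'" "restr g1 a = restr g3 b'" using A B by simp_all
  moreover have "wpre w1 (length \<mu>1 + length a) = \<mu>1 @ a" using A(1) by (metis length_append wpre_len)
  moreover have "\<mu>1 @ a = \<mu>3 @ b'" using A(1) B(2) by simp
  ultimately show ?thesis using w12 w23 unfolding gerel_iff by metis
qed

lemma germ_eq:
  assumes "((\<eta>,g,\<mu>),w) \<in> GDom n \<alpha>" "((\<eta>',g',\<mu>'),w') \<in> GDom n \<alpha>"
  shows "germ n \<alpha> (\<eta>,g,\<mu>) w = germ n \<alpha> (\<eta>',g',\<mu>') w' \<longleftrightarrow> gerel ((\<eta>,g,\<mu>),w) ((\<eta>',g',\<mu>'),w')"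
proof
  assume "germ n \<alpha> (\<eta>,g,\<mu>) w = germ n \<alpha> (\<eta>',g',\<mu>') w'"
  moreover have "((\<eta>',g',\<mu>'),w') \<in> germ n \<alpha> (\<eta>',g',\<mu>') w'"
    using assms(2) by (simp add: germ_def GDom_iff gerel_refl)
  ultimately show "gerel ((\<eta>,g,\<mu>),w) ((\<eta>',g',\<mu>'),w')" unfolding germ_def by blast
next
  assume r: "gerel ((\<eta>,g,\<mu>),w) ((\<eta>',g',\<mu>'),w')"
  have t1: "TA g" "TA g'" using assms by (auto simp: GDom_iff Gn_TA)
  show "germ n \<alpha> (\<eta>,g,\<mu>) w = germ n \<alpha> (\<eta>',g',\<mu>') w'"
  proof (intro set_eqI iffI)
    fix q assume "q \<in> germ n \<alpha> (\<eta>,g,\<mu>) w"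
    moreover obtain a b c d where q: "q = ((a,b,c),d)" by (cases q) auto
    ultimately have "q \<in> GDom n \<alpha>" "gerel ((\<eta>,g,\<mu>),w) ((a,b,c),d)" by (auto simp: germ_def)
    hence "TA b" using q by (auto simp: GDom_iff Gn_TA)
    have "gerel ((\<eta>',g',\<mu>'),w') ((a,b,c),d)"
      by (rule gerel_trans[OF gerel_sym[OF r] \<open>gerel _ ((a,b,c),d)\<close> t1(2) t1(1) \<open>TA b\<close>])
    thus "q \<in> germ n \<alpha> (\<eta>',g',\<mu>') w'" using \<open>q \<in> GDom n \<alpha>\<close> q by (simp add: germ_def)
  next
    fix q assume "q \<in> germ n \<alpha> (\<eta>',g',\<mu>') w'"
    moreover obtain a b c d where q: "q = ((a,b,c),d)" by (cases q) auto
    ultimately have "q \<in> GDom n \<alpha>" "gerel ((\<eta>',g',\<mu>'),w') ((a,b,c),d)" by (auto simp: germ_def)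
    hence "TA b" using q by (auto simp: GDom_iff Gn_TA)
    have "gerel ((\<eta>,g,\<mu>),w) ((a,b,c),d)"
      by (rule gerel_trans[OF r \<open>gerel _ ((a,b,c),d)\<close> t1(1) t1(2) \<open>TA b\<close>])
    thus "q \<in> germ n \<alpha> (\<eta>,g,\<mu>) w" using \<open>q \<in> GDom n \<alpha>\<close> q by (simp add: germ_def)
  qed
qed

lemma gsrc_germ:
  assumes "((\<eta>,g,\<mu>),w) \<in> GDom n \<alpha>"
  shows "gsrc (germ n \<alpha> (\<eta>,g,\<mu>) w) = w"
proof -
  have ne: "((\<eta>,g,\<mu>),w) \<in> germ n \<alpha> (\<eta>,g,\<mu>) w"
    using assms by (simp add: germ_def GDom_iff gerel_refl)
  have "snd p = w" if "p \<in> germ n \<alpha> (\<eta>,g,\<mu>) w" for p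
  proof -
    obtain a b c d where q: "p = ((a,b,c),d)" by (cases p) auto
    thus ?thesis using that by (auto simp: germ_def gerel_iff)
  qed
  thus ?thesis unfolding gsrc_def using someI[of "\<lambda>p. p \<in> germ n \<alpha> (\<eta>,g,\<mu>) w", OF ne] by blast
qed

lemma germ_Grpd: "(s,w) \<in> GDom n \<alpha> \<Longrightarrow> germ n \<alpha> s w \<in> Grpd n \<alpha>"
  unfolding Grpd_def by blast

lemma bis_open:
  assumes "g \<in> Gn n \<alpha>" "cantor_open V" "V \<subseteq> cyl \<mu>"
  shows "G_open n \<alpha> (bis n \<alpha> (\<eta>,g,\<mu>) V)"
  unfolding G_open_def
proof (intro conjI ballI)
  show "bis n \<alpha> (\<eta>, g, \<mu>) V \<subseteq> Grpd n \<alpha>"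
    using assms by (auto simp: bis_def intro!: germ_Grpd simp: GDom_iff)
  fix x assume "x \<in> bis n \<alpha> (\<eta>, g, \<mu>) V"
  thus "\<exists>\<eta>' g' \<mu>' V'. g' \<in> Gn n \<alpha> \<and> cantor_open V' \<and> V' \<subseteq> cyl \<mu>' \<and>
      x \<in> bis n \<alpha> (\<eta>', g', \<mu>') V' \<and> bis n \<alpha> (\<eta>', g', \<mu>') V' \<subseteq> bis n \<alpha> (\<eta>, g, \<mu>) V"
    using assms by blast
qed

definition zb :: "'k \<Rightarrow> germ" where "zb b = germ n \<alpha> ([], iota n \<alpha> b, []) TT"

definition gpt :: "nat \<Rightarrow> bool \<Rightarrow> iword \<Rightarrow> germ" where
  "gpt k s v = germ n \<alpha> (ones k @ [False], phi s, ones k @ [False]) (conc (ones k @ [False]) v)"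

definition Pat :: "nat \<Rightarrow> 'k \<Rightarrow> bool \<Rightarrow> bool" where
  "Pat k b s \<longleftrightarrow> (trace n (\<alpha>^k * b) \<noteq> 0 \<longleftrightarrow> s)"

lemma zb_GDom: "(([], iota n \<alpha> b, []), TT) \<in> GDom n \<alpha>"
  by (simp add: GDom_iff Gn.intros cyl_iff wpre_def)

lemma gpt_GDom: "((ones k @ [False], phi s, ones k @ [False]), conc (ones k @ [False]) v) \<in> GDom n \<alpha>"
  by (simp add: GDom_iff phi_Gn conc_cyl)

lemma zb0: "zb 0 = z_e n \<alpha>"
  by (simp add: zb_def z_e_def iota_0')

lemma gsrc_zb: "gsrc (zb b) = TT"
  unfolding zb_def by (rule gsrc_germ[OF zb_GDom])

lemma gpt_Grpd: "gpt k s v \<in> Grpd n \<alpha>"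
  unfolding gpt_def by (rule germ_Grpd[OF gpt_GDom])

lemma zb_Grpd: "zb b \<in> Grpd n \<alpha>"
  unfolding zb_def by (rule germ_Grpd[OF zb_GDom])

lemma restr_iota_pow: "j \<le> k \<Longrightarrow> restr (iota n \<alpha> (\<alpha>^j * b)) (ones (k - j) @ [False]) = phi (trace n (\<alpha>^k * b) \<noteq> 0)"
proof -
  assume "j \<le> k"
  hence e: "\<alpha>^(k-j) * (\<alpha>^j * b) = \<alpha>^k * b" by (simp add: mult.assoc[symmetric] power_add[symmetric])
  show ?thesis by (simp only: restr_iota_onesF e)
qed

lemma phi_eq: "phi a = phi b \<Longrightarrow> a = b"
  using phi_inj[of a "[]" b] by simp

lemma zb_pattern:
  assumes "zb b = zb c"
  shows "\<exists>j. \<forall>k\<ge>j. \<forall>s. Pat k b s = Pat k c s"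
proof -
  have "gerel (([], iota n \<alpha> b, []), TT) (([], iota n \<alpha> c, []), TT)"
    using assms germ_eq[OF zb_GDom zb_GDom] by (simp add: zb_def)
  then obtain \<epsilon> \<epsilon>' where e: "wpre TT (length \<epsilon>) = \<epsilon>" "\<epsilon> = \<epsilon>'"
      "restr (iota n \<alpha> b) \<epsilon> = restr (iota n \<alpha> c) \<epsilon>'" by (auto simp: gerel_iff)
  define j where "j = length \<epsilon>"
  have "\<epsilon> = ones j" using e(1) by (simp add: wpre_TT j_def)
  hence ii: "iota n \<alpha> (\<alpha>^j * b) = iota n \<alpha> (\<alpha>^j * c)" using e by (simp add: restr_iota_ones)
  show ?thesis
  proof (intro exI allI impI)
    fix k s assume "j \<le> k"
    have "phi (trace n (\<alpha>^k * b) \<noteq> 0) = phi (trace n (\<alpha>^k * c) \<noteq> 0)"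
      using restr_iota_pow[OF \<open>j \<le> k\<close>, of b] restr_iota_pow[OF \<open>j \<le> k\<close>, of c] ii by simp
    thus "Pat k b s = Pat k c s" using phi_eq unfolding Pat_def by blast
  qed
qed

lemma ones_split: "m \<le> k \<Longrightarrow> ones k = ones m @ ones (k - m)"
  by (metis le_add_diff_inverse replicate_add)

lemma conc_onesF_nth: "i < k \<Longrightarrow> conc (ones k @ [False]) v i = True"
  by (simp add: conc_def nth_append)

lemma back_dir:
  assumes "G_open n \<alpha> B" "zb b \<in> B"
  shows "\<exists>K. \<forall>k\<ge>K. \<forall>s v. Pat k b s \<longrightarrow> gpt k s v \<in> B"
proof -
  obtain \<eta> g \<mu> V where o: "g \<in> Gn n \<alpha>" "cantor_open V" "V \<subseteq> cyl \<mu>"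
    "zb b \<in> bis n \<alpha> (\<eta>, g, \<mu>) V" "bis n \<alpha> (\<eta>, g, \<mu>) V \<subseteq> B"
    using assms unfolding G_open_def by blast
  then obtain w where w: "w \<in> V" "zb b = germ n \<alpha> (\<eta>, g, \<mu>) w" by (auto simp: bis_def)
  have gd: "((\<eta>, g, \<mu>), w) \<in> GDom n \<alpha>" using o w by (auto simp: GDom_iff)
  have "gerel (([], iota n \<alpha> b, []), TT) ((\<eta>, g, \<mu>), w)"
    using w(2) germ_eq[OF zb_GDom gd] by (simp add: zb_def)
  then obtain \<epsilon> \<epsilon>' where e: "w = TT" "wpre TT (length \<epsilon>) = \<epsilon>" "\<epsilon> = \<mu> @ \<epsilon>'"
      "iota n \<alpha> b \<epsilon> = \<eta> @ g \<epsilon>'" "restr (iota n \<alpha> b) \<epsilon> = restr g \<epsilon>'" by (auto simp: gerel_iff)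
  define j where "j = length \<epsilon>"
  have ej: "\<epsilon> = ones j" using e(2) by (simp add: wpre_TT j_def)
  obtain M where M: "cyl (ones M) \<subseteq> V" using open_TT[OF o(2)] w e(1) by blast
  have TAg: "TA g" using o(1) Gn_TA by blast
  show ?thesis
  proof (intro exI[of _ "max j M"] allI impI)
    fix k s v assume k: "max j M \<le> k" and P: "Pat k b s"
    let ?p = "conc (ones k @ [False]) v"
    have "?p \<in> cyl (ones M @ (ones (k - M) @ [False]))"
      using ones_split[of M k] k conc_cyl[of "ones k @ [False]" v] by simp
    hence pV: "?p \<in> V" using M cyl_append_sub by blast
    define \<delta> where "\<delta> = ones (k - j) @ [False]"
    have gd2: "((\<eta>, g, \<mu>), ?p) \<in> GDom n \<alpha>" using o pV by (auto simp: GDom_iff)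
    have r1: "\<mu> @ \<epsilon>' @ \<delta> = ones k @ [False]"
      using e(3) ej ones_split[of j k] k by (simp add: \<delta>_def)
    have eg: "\<eta> @ g \<epsilon>' = ones j" using e(4) unfolding ej iota_ones0 by simp
    have er: "restr g \<epsilon>' = iota n \<alpha> (\<alpha>^j * b)" using e(5) unfolding ej restr_iota_ones by simp
    have r2: "\<eta> @ g (\<epsilon>' @ \<delta>) = ones k @ [False]"
    proof -
      have "\<eta> @ g (\<epsilon>' @ \<delta>) = (\<eta> @ g \<epsilon>') @ restr g \<epsilon>' \<delta>" using TA_app[OF TAg] by simp
      also have "\<dots> = ones j @ iota n \<alpha> (\<alpha>^j * b) \<delta>"
        by (simp only: eg er)
      also have "\<dots> = ones k @ [False]"
        using ones_split[of j k] k by (simp add: \<delta>_def iota_onesF)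
      finally show ?thesis .
    qed
    have r3: "restr g (\<epsilon>' @ \<delta>) = phi s"
    proof -
      have "restr g (\<epsilon>' @ \<delta>) = restr (restr g \<epsilon>') \<delta>" using restr_restr[OF TAg] by simp
      also have "\<dots> = restr (iota n \<alpha> (\<alpha>^j * b)) \<delta>" by (simp only: er)
      also have "\<dots> = phi (trace n (\<alpha>^k * b) \<noteq> 0)" unfolding \<delta>_def using k by (intro restr_iota_pow) simp
      also have "\<dots> = phi s" using P unfolding Pat_def by (rule arg_cong[where f=phi])
      finally show ?thesis .
    qed
    have "gerel ((ones k @ [False], phi s, ones k @ [False]), ?p) ((\<eta>, g, \<mu>), ?p)"
      unfolding gerel_iff
      apply (rule conjI, rule refl)
      apply (rule exI[of _ "[]"], rule exI[of _ "\<epsilon>' @ \<delta>"])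
      using wpre_conc0[of "ones k @ [False]" v] r1 r2 r3 by simp
    hence "gpt k s v = germ n \<alpha> (\<eta>, g, \<mu>) ?p"
      unfolding gpt_def using germ_eq[OF gpt_GDom gd2] by simp
    thus "gpt k s v \<in> B" using pV o(5) by (auto simp: bis_def)
  qed
qed

end

context setting
begin

lemma ones_Suc2: "ones (Suc (Suc t)) @ x = True # True # (ones t @ x)"
  by simp

lemma fwd_point:
  assumes "G_open n \<alpha> B" "y \<in> B"
  shows "\<exists>U. G_open n \<alpha> U \<and> y \<in> U \<and> (\<exists>K. \<forall>k\<ge>K. \<forall>s v. gpt k s v \<in> U \<longrightarrow> (\<exists>b. zb b \<in> B \<and> Pat k b s))"
proof -
  obtain \<eta> g \<mu> V where o: "g \<in> Gn n \<alpha>" "cantor_open V" "V \<subseteq> cyl \<mu>"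
    "y \<in> bis n \<alpha> (\<eta>, g, \<mu>) V" "bis n \<alpha> (\<eta>, g, \<mu>) V \<subseteq> B"
    using assms unfolding G_open_def by blast
  then obtain w where w: "w \<in> V" "y = germ n \<alpha> (\<eta>, g, \<mu>) w" by (auto simp: bis_def)
  have TAg: "TA g" using o(1) Gn_TA by blast
  have src: "\<And>k s v w'. w' \<in> V \<Longrightarrow> gpt k s v = germ n \<alpha> (\<eta>, g, \<mu>) w' \<Longrightarrow> w' = conc (ones k @ [False]) v"
  proof -
    fix k s v w' assume "w' \<in> V" "gpt k s v = germ n \<alpha> (\<eta>, g, \<mu>) w'"
    hence "gsrc (gpt k s v) = w'" using o(3) by (metis GDom_iff gsrc_germ o(1) subsetD)
    moreover have "gsrc (gpt k s v) = conc (ones k @ [False]) v" unfolding gpt_def by (rule gsrc_germ[OF gpt_GDom])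
    ultimately show "w' = conc (ones k @ [False]) v" by simp
  qed
  show ?thesis
  proof (cases "\<exists>i. \<not> w i")
    case True
    then obtain i where i: "\<not> w i" by blast
    let ?V = "V \<inter> cyl (wpre w (Suc i))"
    let ?U = "bis n \<alpha> (\<eta>, g, \<mu>) ?V"
    have "G_open n \<alpha> ?U" using o(1-3) by (intro bis_open cantor_open_Int cantor_open_cyl) auto
    moreover have "y \<in> ?U" using w by (auto simp: bis_def cyl_iff)
    moreover have "\<forall>k\<ge>Suc i. \<forall>s v. gpt k s v \<in> ?U \<longrightarrow> (\<exists>b. zb b \<in> B \<and> Pat k b s)"
    proof (intro allI impI)
      fix k s v assume k: "Suc i \<le> k" and "gpt k s v \<in> ?U"
      then obtain w' where w': "w' \<in> ?V" "gpt k s v = germ n \<alpha> (\<eta>, g, \<mu>) w'" by (auto simp: bis_def)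
      hence p: "w' = conc (ones k @ [False]) v" using src by blast
      have "wpre w' (Suc i) = wpre w (Suc i)" using w'(1) by (simp add: cyl_iff)
      hence "w' i = w i" using wpre_nth[of i "Suc i" w'] wpre_nth[of i "Suc i" w] by simp
      moreover have "w' i = True" using p k conc_onesF_nth by simp
      ultimately show "\<exists>b. zb b \<in> B \<and> Pat k b s" using i by simp
    qed
    ultimately show ?thesis by blast
  next
    case False
    hence wT: "w = TT" by auto
    let ?U = "bis n \<alpha> (\<eta>, g, \<mu>) V"
    have "G_open n \<alpha> ?U" using o(1-3) by (intro bis_open) auto
    moreover have "y \<in> ?U" using o(4) .
    moreover
    obtain J ws where c: "nrm ws" "countI ws \<le> 1" "restr g (ones J) = ev ws"
      using contraction[OF o(1)] by blast
    define m where "m = length \<mu>"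
    have mu: "\<mu> = ones m" using w(1) o(3) wT by (auto simp: cyl_iff wpre_TT m_def)
    have "\<forall>k\<ge>m + J + 2. \<forall>s v. gpt k s v \<in> ?U \<longrightarrow> (\<exists>b. zb b \<in> B \<and> Pat k b s)"
    proof (intro allI impI)
      fix k s v assume k: "m + J + 2 \<le> k" and "gpt k s v \<in> ?U"
      then obtain w' where w': "w' \<in> V" "gpt k s v = germ n \<alpha> (\<eta>, g, \<mu>) w'" by (auto simp: bis_def)
      let ?p = "conc (ones k @ [False]) v"
      have p: "w' = ?p" using src w' by blast
      have gd2: "((\<eta>, g, \<mu>), ?p) \<in> GDom n \<alpha>" using o w' p by (auto simp: GDom_iff)
      have "gerel ((ones k @ [False], phi s, ones k @ [False]), ?p) ((\<eta>, g, \<mu>), ?p)"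
        using w'(2) p germ_eq[OF gpt_GDom gd2] unfolding gpt_def by simp
      then obtain \<epsilon> \<epsilon>' where e: "(ones k @ [False]) @ \<epsilon> = \<mu> @ \<epsilon>'"
        "(ones k @ [False]) @ phi s \<epsilon> = \<eta> @ g \<epsilon>'" "restr (phi s) \<epsilon> = restr g \<epsilon>'"
        unfolding gerel_iff by blast
      have km: "ones k = ones m @ ones (k - m)" using k by (intro ones_split) simp
      have e1: "\<epsilon>' = ones (k - m) @ [False] @ \<epsilon>" using e(1) mu km by simp
      have lg: "length (g \<epsilon>') = length \<epsilon>'" using TA_len[OF TAg] .
      have "length \<eta> = m" using arg_cong[OF e(2), of length] lg e1 k by simp
      hence e2: "\<eta> = ones m" "g \<epsilon>' = ones (k - m) @ [False] @ phi s \<epsilon>"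
        using e(2) km by (simp_all add: append_eq_append_conv)
      define t where "t = k - m - J"
      have kmJ: "ones (k - m) = ones J @ ones t" using k ones_split[of J "k - m"] by (simp add: t_def)
      have e3: "\<epsilon>' = ones J @ (ones t @ [False] @ \<epsilon>)" using e1 kmJ by simp
      have "g \<epsilon>' = g (ones J) @ ev ws (ones t @ [False] @ \<epsilon>)"
        using e3 TA_app[OF TAg, of "ones J"] c(3) by simp
      moreover have "length (g (ones J)) = J" using TA_len[OF TAg] by simp
      ultimately have gJ: "g (ones J) = ones J" and hJ: "ev ws (ones t @ [False] @ \<epsilon>) = ones t @ [False] @ phi s \<epsilon>"
        using e2(2) kmJ by (simp_all add: append_eq_append_conv)
      have t2: "2 \<le> t" using k unfolding t_def by simp
      obtain t' where t': "t = Suc (Suc t')" using t2 by (metis add_2_eq_Suc le_add_diff_inverse)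
      have "ev ws (True # True # (ones t' @ [False] @ \<epsilon>)) = True # True # (ones t' @ [False] @ phi s \<epsilon>)"
        using hJ t' by simp
      then obtain j0 \<gamma> where h: "j0 \<le> 1" "ev ws (ones j0) = ones j0" "restr (ev ws) (ones j0) = iota n \<alpha> \<gamma>"
        using h_analysis[OF c(1,2)] by blast
      define j where "j = J + j0"
      have gj: "g (ones j) = ones j"
        using TA_app[OF TAg, of "ones J" "ones j0"] gJ c(3) h(2) by (simp add: j_def replicate_add)
      have rj: "restr g (ones j) = iota n \<alpha> \<gamma>"
        using restr_restr[OF TAg, of "ones J" "ones j0"] c(3) h(3) by (simp add: j_def replicate_add)
      define b where "b = inverse (\<alpha>^(m+j)) * \<gamma>"
      have ab: "\<alpha>^(m+j) * b = \<gamma>" using alpha_nz by (simp add: b_def)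
      have "gerel (([], iota n \<alpha> b, []), TT) ((\<eta>, g, \<mu>), TT)"
        unfolding gerel_iff
        apply (rule conjI, rule refl)
        apply (rule exI[of _ "ones (m+j)"], rule exI[of _ "ones j"])
        using mu e2(1) gj rj ab replicate_add[of m j True, symmetric] by (simp add: wpre_TT iota_ones0 restr_iota_ones)
      moreover have "TT \<in> cyl \<mu>" using o(3) w(1) wT by blast
      ultimately have "zb b = y" using germ_eq[OF zb_GDom, of \<eta> g \<mu> TT] o(1) w wT
        unfolding zb_def by (simp add: GDom_iff)
      hence zbB: "zb b \<in> B" using o(4,5) by blast
      define d where "d = k - m - j"
      have kmj: "ones (k - m) = ones j @ ones d" using k h(1) ones_split[of j "k - m"] by (simp add: d_def j_def)
      have e4: "\<epsilon>' = ones j @ ((ones d @ [False]) @ \<epsilon>)" using e1 kmj by simp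
      define a where "a = (trace n (\<alpha>^d * \<gamma>) \<noteq> 0)"
      have ra: "restr (iota n \<alpha> \<gamma>) (ones d @ [False]) = phi a" by (simp add: a_def restr_iota_onesF)
      have "g \<epsilon>' = ones j @ iota n \<alpha> \<gamma> ((ones d @ [False]) @ \<epsilon>)"
        using e4 TA_app[OF TAg, of "ones j"] gj rj by simp
      also have "\<dots> = ones j @ (ones d @ [False]) @ phi a \<epsilon>"
        using TA_app[OF TA_iota, of \<gamma> "ones d @ [False]" \<epsilon>] ra by (simp add: iota_onesF)
      finally have "phi a \<epsilon> = phi s \<epsilon>" using e2(2) kmj by simp
      moreover have "restr g \<epsilon>' = restr (phi a) \<epsilon>"
        using e4 restr_restr[OF TAg, of "ones j"] restr_restr[OF TA_iota, of \<gamma> "ones d @ [False]" \<epsilon>] rj ra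
        by simp
      ultimately have "a = s" using e(3) phi_inj by metis
      moreover have "\<alpha>^d * \<gamma> = \<alpha>^k * b"
      proof -
        have "\<alpha>^d * \<gamma> = \<alpha>^d * \<alpha>^(m+j) * b" using ab by (simp add: mult.assoc)
        also have "\<dots> = \<alpha>^(d + (m + j)) * b" by (simp add: power_add)
        also have "d + (m + j) = k" using k h(1) by (simp add: d_def j_def)
        finally show ?thesis .
      qed
      ultimately have "Pat k b s" unfolding Pat_def a_def by simp
      thus "\<exists>b. zb b \<in> B \<and> Pat k b s" using zbB by blast
    qed
    ultimately show ?thesis by blast
  qed
qed

end

context setting
begin

lemma KL:
  assumes "compact_open_bisection n \<alpha> B"
  shows "\<exists>K. \<forall>k\<ge>K. \<forall>s v. gpt k s v \<in> B \<longleftrightarrow> (\<exists>b. zb b \<in> B \<and> Pat k b s)"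
proof -
  have op: "G_open n \<alpha> B" and cp: "G_compact n \<alpha> B"
    using assms unfolding compact_open_bisection_def by auto
  have "\<forall>b\<in>UNIV. \<exists>K. \<forall>k\<ge>K. zb b \<in> B \<longrightarrow> (\<forall>s v. Pat k b s \<longrightarrow> gpt k s v \<in> B)"
  proof
    fix b :: 'k
    show "\<exists>K. \<forall>k\<ge>K. zb b \<in> B \<longrightarrow> (\<forall>s v. Pat k b s \<longrightarrow> gpt k s v \<in> B)"
    proof (cases "zb b \<in> B")
      case True thus ?thesis using back_dir[OF op True] by blast
    qed auto
  qed
  hence "\<exists>K. \<forall>b\<in>UNIV. \<forall>k\<ge>K. zb b \<in> B \<longrightarrow> (\<forall>s v. Pat k b s \<longrightarrow> gpt k s v \<in> B)"
    by (intro finite_threshold) simp_all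
  then obtain K1 where K1: "\<forall>b. \<forall>k\<ge>K1. zb b \<in> B \<longrightarrow> (\<forall>s v. Pat k b s \<longrightarrow> gpt k s v \<in> B)"
    by blast
  define UU where "UU = {U. G_open n \<alpha> U \<and> (\<exists>K. \<forall>k\<ge>K. \<forall>s v. gpt k s v \<in> U \<longrightarrow> (\<exists>b. zb b \<in> B \<and> Pat k b s))}"
  have BU: "B \<subseteq> \<Union>UU"
  proof
    fix y assume "y \<in> B"
    from fwd_point[OF op this] obtain U where "G_open n \<alpha> U" "y \<in> U"
      "\<exists>K. \<forall>k\<ge>K. \<forall>s v. gpt k s v \<in> U \<longrightarrow> (\<exists>b. zb b \<in> B \<and> Pat k b s)" by blast
    thus "y \<in> \<Union>UU" unfolding UU_def by blast
  qed
  have UUo: "\<forall>U\<in>UU. G_open n \<alpha> U" unfolding UU_def by blast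
  have cpx: "\<And>UU. (\<forall>U\<in>UU. G_open n \<alpha> U) \<Longrightarrow> B \<subseteq> \<Union>UU \<Longrightarrow> \<exists>VV\<subseteq>UU. finite VV \<and> B \<subseteq> \<Union>VV"
    using cp unfolding G_compact_def by blast
  obtain VV where VV: "VV \<subseteq> UU" "finite VV" "B \<subseteq> \<Union>VV"
    using cpx[OF UUo BU] by blast
  have "\<forall>U\<in>VV. \<exists>K. \<forall>k\<ge>K. \<forall>s v. gpt k s v \<in> U \<longrightarrow> (\<exists>b. zb b \<in> B \<and> Pat k b s)"
    using VV(1) unfolding UU_def by blast
  hence "\<exists>K. \<forall>U\<in>VV. \<forall>k\<ge>K. \<forall>s v. gpt k s v \<in> U \<longrightarrow> (\<exists>b. zb b \<in> B \<and> Pat k b s)"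
    by (rule finite_threshold[OF VV(2)])
  then obtain K2 where K2: "\<forall>U\<in>VV. \<forall>k\<ge>K2. \<forall>s v. gpt k s v \<in> U \<longrightarrow> (\<exists>b. zb b \<in> B \<and> Pat k b s)"
    by blast
  show ?thesis
  proof (intro exI[of _ "max K1 K2"] allI impI iffI)
    fix k s v assume k: "max K1 K2 \<le> k" and "gpt k s v \<in> B"
    then obtain U where "U \<in> VV" "gpt k s v \<in> U" using VV(3) by blast
    thus "\<exists>b. zb b \<in> B \<and> Pat k b s" using K2 k by (meson max.boundedE)
  next
    fix k s v assume k: "max K1 K2 \<le> k" and "\<exists>b. zb b \<in> B \<and> Pat k b s"
    thus "gpt k s v \<in> B" using K1 by auto
  qed
qed

definition AA :: nat where "AA = card {x::'k. trace n x \<noteq> 0}"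

lemma AA_pos: "AA > 0"
  unfolding AA_def using trace_nonzero by (auto simp: card_gt_0_iff)

lemma AA_le: "AA \<le> Q"
proof -
  have "{x::'k. trace n x \<noteq> 0} \<subseteq> UNIV - {0}" using trace_zero by auto
  hence "AA \<le> card (UNIV - {0::'k})" unfolding AA_def by (intro card_mono) auto
  thus ?thesis using card_nz by simp
qed

lemma count_pat:
  assumes "b \<noteq> 0"
  shows "card {k\<in>{K..<K+Q}. Pat k b s} = (if s then AA else Q - AA)"
proof -
  let ?h = "\<lambda>k. \<alpha>^k * b"
  let ?P = "{k\<in>{K..<K+Q}. trace n (\<alpha>^k * b) \<noteq> 0}"
  have inj: "inj_on ?h {K..<K+Q}" by (rule pow_inj_on[OF assms])
  have "?h ` ?P = {x \<in> ?h ` {K..<K+Q}. trace n x \<noteq> 0}" by auto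
  also have "\<dots> = {x. trace n x \<noteq> 0}" using pow_bij[OF assms, of K] trace_zero by auto
  finally have hP: "?h ` ?P = {x. trace n x \<noteq> 0}" .
  have "card (?h ` ?P) = card ?P" by (rule card_image[OF inj_on_subset[OF inj]]) auto
  hence "card ?P = AA" unfolding AA_def using hP by simp
  moreover have "{k\<in>{K..<K+Q}. \<not> trace n (\<alpha>^k * b) \<noteq> 0} = {K..<K+Q} - ?P" by auto
  moreover have "card ({K..<K+Q} - ?P) = Q - card ?P" by (subst card_Diff_subset) auto
  ultimately show ?thesis unfolding Pat_def by (cases s) auto
qed

end

lemma sum_ind_card: "finite S \<Longrightarrow> (\<Sum>k\<in>S. (if P k then 1 else 0 :: complex)) = of_nat (card {k\<in>S. P k})"
  by (simp add: sum.inter_filter[symmetric])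

context setting
begin

lemma main:
  fixes f :: "germ \<Rightarrow> complex" and F :: "nat \<Rightarrow> germ \<Rightarrow> complex"
  assumes fz: "f (z_e n \<alpha>) \<noteq> 0" and FS: "\<forall>j. F j \<in> steinberg n \<alpha>"
    and conv: "\<forall>e>0. \<exists>N. \<forall>j\<ge>N. \<forall>x\<in>Grpd n \<alpha>. norm (F j x - f x) < e"
  shows "\<exists>W. G_open n \<alpha> W \<and> W \<noteq> {} \<and> W \<subseteq> gsupp n \<alpha> f"
proof (rule ccontr)
  assume H: "\<not> ?thesis"
  define \<delta> where "\<delta> = norm (f (z_e n \<alpha>))"
  have dpos: "\<delta> > 0" using fz by (simp add: \<delta>_def)
  define \<epsilon> where "\<epsilon> = \<delta> * real AA / (2 * real Q)"
  have epos: "\<epsilon> > 0" using dpos AA_pos Q_pos by (simp add: \<epsilon>_def)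
  have ele: "\<epsilon> \<le> \<delta> / 2"
  proof -
    have "real AA \<le> real Q" using AA_le by simp
    hence "\<delta> * real AA \<le> \<delta> * real Q" using dpos by (intro mult_left_mono) auto
    thus ?thesis using Q_pos by (simp add: \<epsilon>_def field_simps)
  qed
  obtain N where N0: "\<forall>j\<ge>N. \<forall>x\<in>Grpd n \<alpha>. norm (F j x - f x) < \<epsilon>" using conv epos by auto
  have N: "\<forall>x\<in>Grpd n \<alpha>. norm (F N x - f x) < \<epsilon>" using N0 by auto
  have "F N \<in> steinberg n \<alpha>" using FS by simp
  have "\<exists>(r::nat) (c::nat \<Rightarrow> complex) B. (\<forall>i<r. compact_open_bisection n \<alpha> (B i)) \<and>
      F N = (\<lambda>x. \<Sum>i<r. c i * (if x \<in> B i then 1 else 0))"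
    using \<open>F N \<in> steinberg n \<alpha>\<close> unfolding steinberg_def mem_Collect_eq .
  then obtain r :: nat and c :: "nat \<Rightarrow> complex" and B :: "nat \<Rightarrow> germ set"
    where Bc: "\<forall>i<r. compact_open_bisection n \<alpha> (B i)"
    and FN: "F N = (\<lambda>x. \<Sum>i<r. c i * (if x \<in> B i then 1 else 0))"
    by (elim exE conjE)
  have "\<forall>i\<in>{..<r}. \<exists>K. \<forall>k\<ge>K. \<forall>s v. gpt k s v \<in> B i \<longleftrightarrow> (\<exists>b. zb b \<in> B i \<and> Pat k b s)"
    using KL Bc by blast
  hence "\<exists>K. \<forall>i\<in>{..<r}. \<forall>k\<ge>K. \<forall>s v. gpt k s v \<in> B i \<longleftrightarrow> (\<exists>b. zb b \<in> B i \<and> Pat k b s)"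
    by (rule finite_threshold[OF finite_lessThan, where R="\<lambda>i k. \<forall>s v. gpt k s v \<in> B i \<longleftrightarrow> (\<exists>b. zb b \<in> B i \<and> Pat k b s)"])
  then obtain K3 where K3: "\<forall>i<r. \<forall>k\<ge>K3. \<forall>s v. gpt k s v \<in> B i \<longleftrightarrow> (\<exists>b. zb b \<in> B i \<and> Pat k b s)"
    by blast
  have "\<forall>p\<in>(UNIV::('k \<times> 'k) set). \<exists>K. \<forall>k\<ge>K. zb (fst p) = zb (snd p) \<longrightarrow> (\<forall>s. Pat k (fst p) s = Pat k (snd p) s)"
  proof
    fix p :: "'k \<times> 'k"
    show "\<exists>K. \<forall>k\<ge>K. zb (fst p) = zb (snd p) \<longrightarrow> (\<forall>s. Pat k (fst p) s = Pat k (snd p) s)"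
    proof (cases "zb (fst p) = zb (snd p)")
      case True thus ?thesis using zb_pattern[OF True] by blast
    qed auto
  qed
  hence "\<exists>K. \<forall>p\<in>(UNIV::('k \<times> 'k) set). \<forall>k\<ge>K. zb (fst p) = zb (snd p) \<longrightarrow> (\<forall>s. Pat k (fst p) s = Pat k (snd p) s)"
    by (rule finite_threshold[OF finite_UNIV, where R="\<lambda>p k. zb (fst p) = zb (snd p) \<longrightarrow> (\<forall>s. Pat k (fst p) s = Pat k (snd p) s)"])
  then obtain K4 where K4': "\<forall>p\<in>(UNIV::('k \<times> 'k) set). \<forall>k\<ge>K4. zb (fst p) = zb (snd p) \<longrightarrow> (\<forall>s. Pat k (fst p) s = Pat k (snd p) s)"
    by blast
  have K4: "Pat k b s = Pat k b' s" if "K4 \<le> k" "zb b = zb b'" for b b' k s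
    using K4'[rule_format, of "(b, b')" k] that by simp
  define K where "K = max K3 K4"
  have ex0: "\<exists>v. f (gpt k s v) = 0" for k s
  proof -
    let ?W = "bis n \<alpha> (ones k @ [False], phi s, ones k @ [False]) (cyl (ones k @ [False]))"
    have "G_open n \<alpha> ?W" by (rule bis_open[OF phi_Gn cantor_open_cyl]) simp
    moreover have "gpt k s v0 \<in> ?W" for v0 unfolding gpt_def bis_def using conc_cyl by blast
    ultimately have "\<not> ?W \<subseteq> gsupp n \<alpha> f" using H by blast
    then obtain x where x: "x \<in> ?W" "x \<notin> gsupp n \<alpha> f" by blast
    then obtain w where w: "w \<in> cyl (ones k @ [False])"
      "x = germ n \<alpha> (ones k @ [False], phi s, ones k @ [False]) w" by (auto simp: bis_def)
    have "x = gpt k s (shiftw (length (ones k @ [False])) w)"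
      unfolding gpt_def w(2) using cyl_conc[OF w(1)] by simp
    moreover hence "x \<in> Grpd n \<alpha>" using gpt_Grpd by simp
    ultimately show ?thesis using x(2) unfolding gsupp_def by blast
  qed
  define vv where "vv k s = (SOME v. f (gpt k s v) = 0)" for k s
  have vv: "f (gpt k s (vv k s)) = 0" for k s unfolding vv_def using someI_ex[OF ex0] .
  have small: "norm (F N (gpt k s (vv k s))) < \<epsilon>" for k s
  proof -
    have "norm (F N (gpt k s (vv k s)) - f (gpt k s (vv k s))) < \<epsilon>" using N gpt_Grpd by blast
    thus ?thesis using vv[of k s] by simp
  qed
  define Z where "Z i = (zb 0 \<in> B i)" for i
  define E where "E i = (\<exists>b. zb b \<in> B i)" for i
  define bi where "bi i = (SOME b. zb b \<in> B i)" for i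
  have same: "Pat k b s = Pat k b' s" if "i < r" "K \<le> k" "zb b \<in> B i" "zb b' \<in> B i" for i k b b' s
  proof -
    have "inj_on gsrc (B i)" using Bc that(1) unfolding compact_open_bisection_def G_bisection_def by blast
    hence "zb b = zb b'" by (rule inj_onD) (simp_all add: gsrc_zb that(3,4))
    moreover have "K4 \<le> k" using that(2) by (simp add: K_def)
    ultimately show ?thesis using K4 by blast
  qed
  have Pat0: "Pat k 0 s = (\<not> s)" for k s unfolding Pat_def using trace_zero by simp
  have char: "(gpt k s v \<in> B i) = (if Z i then \<not> s else if E i then Pat k (bi i) s else False)"
    if "i < r" "K \<le> k" for i k s v
  proof -
    have kl: "gpt k s v \<in> B i \<longleftrightarrow> (\<exists>b. zb b \<in> B i \<and> Pat k b s)" using K3 that unfolding K_def by simp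
    show ?thesis
    proof (cases "Z i")
      case True
      have "Pat k b s = Pat k 0 s" if "zb b \<in> B i" for b
        using same[OF \<open>i < r\<close> \<open>K \<le> k\<close> that, of 0 s] True unfolding Z_def by simp
      hence "(\<exists>b. zb b \<in> B i \<and> Pat k b s) = Pat k 0 s" using True unfolding Z_def by blast
      thus ?thesis using kl True Pat0 by simp
    next
      case False
      show ?thesis
      proof (cases "E i")
        case True
        hence "zb (bi i) \<in> B i" unfolding E_def bi_def by (rule someI_ex)
        have "Pat k b s = Pat k (bi i) s" if "zb b \<in> B i" for b
          using same[OF \<open>i < r\<close> \<open>K \<le> k\<close> that \<open>zb (bi i) \<in> B i\<close>] by simp
        hence "(\<exists>b. zb b \<in> B i \<and> Pat k b s) = Pat k (bi i) s" using \<open>zb (bi i) \<in> B i\<close> by blast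
        thus ?thesis using kl True False by simp
      next
        case False2: False
        thus ?thesis using kl False unfolding E_def by simp
      qed
    qed
  qed
  have bnz: "bi i \<noteq> 0" if "\<not> Z i" "E i" for i
  proof
    assume "bi i = 0"
    moreover have "zb (bi i) \<in> B i" using that(2) unfolding E_def bi_def by (rule someI_ex)
    ultimately show False using that(1) unfolding Z_def by simp
  qed
  define Per where "Per = {K..<K+Q}"
  have cardPer: "card Per = Q" unfolding Per_def by simp
  have cnt: "card {k\<in>Per. gpt k s (vv k s) \<in> B i} =
      (if Z i then (if s then 0 else Q) else if E i then (if s then AA else Q - AA) else 0)" if "i < r" for i s
  proof -
    have eqc: "(gpt k s (vv k s) \<in> B i) = (if Z i then \<not> s else if E i then Pat k (bi i) s else False)"
      if "k \<in> Per" for k using char[OF \<open>i < r\<close>] that unfolding Per_def by simp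
    have "{k\<in>Per. gpt k s (vv k s) \<in> B i} = {k\<in>Per. (if Z i then \<not> s else if E i then Pat k (bi i) s else False)}"
      by (rule Collect_cong) (use eqc in blast)
    moreover have "card {k\<in>Per. (if Z i then \<not> s else if E i then Pat k (bi i) s else False)} =
      (if Z i then (if s then 0 else Q) else if E i then (if s then AA else Q - AA) else 0)"
    proof (cases "Z i")
      case True thus ?thesis using cardPer by (cases s) auto
    next
      case False
      show ?thesis
      proof (cases "E i")
        case True thus ?thesis using False count_pat[OF bnz[OF False True]] unfolding Per_def by simp
      qed (use False in simp)
    qed
    ultimately show ?thesis by simp
  qed
  have sumF: "(\<Sum>k\<in>Per. F N (gpt k s (vv k s))) = (\<Sum>i<r. c i * of_nat (card {k\<in>Per. gpt k s (vv k s) \<in> B i}))" for s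
  proof -
    have "(\<Sum>k\<in>Per. F N (gpt k s (vv k s))) = (\<Sum>i<r. \<Sum>k\<in>Per. c i * (if gpt k s (vv k s) \<in> B i then 1 else 0))"
      unfolding FN by (rule sum.swap)
    also have "\<dots> = (\<Sum>i<r. c i * (\<Sum>k\<in>Per. (if gpt k s (vv k s) \<in> B i then 1 else 0)))"
      by (simp add: sum_distrib_left)
    also have "\<dots> = (\<Sum>i<r. c i * of_nat (card {k\<in>Per. gpt k s (vv k s) \<in> B i}))"
      unfolding Per_def by (simp add: sum_ind_card)
    finally show ?thesis .
  qed
  define val0 where "val0 = (\<Sum>i<r. c i * (if Z i then 1 else 0))"
  define S where "S = (\<Sum>i<r. c i * (if \<not> Z i \<and> E i then 1 else 0))"
  have sT: "(\<Sum>k\<in>Per. F N (gpt k True (vv k True))) = of_nat AA * S"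
  proof -
    have "(\<Sum>k\<in>Per. F N (gpt k True (vv k True))) = (\<Sum>i<r. of_nat AA * (c i * (if \<not> Z i \<and> E i then 1 else 0)))"
      unfolding sumF by (intro sum.cong refl) (simp add: cnt)
    thus ?thesis unfolding S_def by (simp add: sum_distrib_left)
  qed
  have sF: "(\<Sum>k\<in>Per. F N (gpt k False (vv k False))) = of_nat Q * val0 + of_nat (Q - AA) * S"
  proof -
    have "(\<Sum>k\<in>Per. F N (gpt k False (vv k False))) =
      (\<Sum>i<r. of_nat Q * (c i * (if Z i then 1 else 0)) + of_nat (Q - AA) * (c i * (if \<not> Z i \<and> E i then 1 else 0)))"
      unfolding sumF by (intro sum.cong refl) (simp add: cnt)
    thus ?thesis unfolding S_def val0_def by (simp add: sum.distrib sum_distrib_left)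
  qed
  have bound: "norm (\<Sum>k\<in>Per. F N (gpt k s (vv k s))) \<le> real Q * \<epsilon>" for s
  proof -
    have "norm (\<Sum>k\<in>Per. F N (gpt k s (vv k s))) \<le> (\<Sum>k\<in>Per. norm (F N (gpt k s (vv k s))))"
      by (rule norm_sum)
    also have "\<dots> \<le> of_nat (card Per) * \<epsilon>" using small by (intro sum_bounded_above) (simp add: less_imp_le)
    finally show ?thesis using cardPer by simp
  qed
  have v0: "F N (z_e n \<alpha>) = val0" unfolding FN val0_def Z_def zb0[symmetric] by simp
  have "norm (F N (z_e n \<alpha>) - f (z_e n \<alpha>)) < \<epsilon>" using N zb_Grpd zb0 by metis
  hence y_gt: "norm val0 > \<delta> - \<epsilon>" using v0 norm_triangle_sub[of "f (z_e n \<alpha>)" val0] unfolding \<delta>_def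
    by (simp add: norm_minus_commute)
  define a where "a = real AA"
  define q where "q = real Q"
  define x where "x = norm S"
  define y where "y = norm val0"
  have a_pos: "a > 0" and q_pos: "q > 0" and aq: "a \<le> q" using AA_pos Q_pos AA_le by (simp_all add: a_def q_def)
  have h1: "a * x \<le> q * \<epsilon>" using bound[of True] sT by (simp add: a_def q_def x_def norm_mult)
  have h2: "q * y \<le> q * \<epsilon> + (q - a) * x"
  proof -
    have n1: "norm (of_nat (Q - AA) * S :: complex) = real (Q - AA) * x"
      by (simp only: norm_mult norm_of_nat x_def)
    have n2: "real (Q - AA) = q - a" using AA_le by (simp add: q_def a_def of_nat_diff)
    have "q * y = norm (of_nat Q * val0)" by (simp add: q_def y_def norm_mult)
    also have "\<dots> \<le> norm (of_nat Q * val0 + of_nat (Q - AA) * S) + norm (of_nat (Q - AA) * S)"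
      using norm_triangle_sub[of "of_nat Q * val0" "of_nat Q * val0 + of_nat (Q - AA) * S"] by simp
    also have "\<dots> \<le> q * \<epsilon> + (q - a) * x"
      using bound[of False] sF n1 n2 by (simp add: q_def)
    finally show ?thesis .
  qed
  have "a * (q * y) \<le> a * (q * \<epsilon>) + (q - a) * (a * x)"
    using mult_left_mono[OF h2, of a] a_pos by (simp add: algebra_simps)
  also have "(q - a) * (a * x) \<le> (q - a) * (q * \<epsilon>)"
    using aq h1 by (intro mult_left_mono) auto
  finally have "a * (q * y) \<le> q * q * \<epsilon>" by (simp add: algebra_simps)
  also have "q * q * \<epsilon> = a * (q * (\<delta> / 2))" using q_pos by (simp add: \<epsilon>_def a_def q_def field_simps)
  finally have "y \<le> \<delta> / 2" using a_pos q_pos by (simp add: mult_le_cancel_left_pos)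
  moreover have "y > \<delta> / 2" using y_gt ele unfolding y_def by simp
  ultimately show False by simp
qed

end

theorem mainTheorem12:
  fixes n :: nat and \<alpha> :: "'k::{field,finite}"
    and f :: "germ \<Rightarrow> complex" and F :: "nat \<Rightarrow> germ \<Rightarrow> complex"
  assumes "n \<ge> 2"
    and "card (UNIV :: 'k set) = 2 ^ n"
    and "\<forall>\<beta>::'k. \<beta> \<noteq> 0 \<longrightarrow> (\<exists>k::nat. \<beta> = \<alpha> ^ k)"
    and "bounded_on_G n \<alpha> f"
    and "f (z_e n \<alpha>) \<noteq> 0"
    and "\<forall>j. F j \<in> steinberg n \<alpha>"
    and "\<forall>e>0. \<exists>N. \<forall>j\<ge>N. \<forall>x\<in>Grpd n \<alpha>. norm (F j x - f x) < e"
  shows "\<exists>W. G_open n \<alpha> W \<and> W \<noteq> {} \<and> W \<subseteq> gsupp n \<alpha> f"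
proof -
  interpret setting n \<alpha> using assms(1-3) by unfold_locales auto
  show ?thesis by (rule main[OF assms(5) assms(6) assms(7)])
qed

end
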